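(* Let $E$ be a separable Banach space over $K$ and $G$ a compact $D$-submodule of $E$. If $X$ is an $E$-valued random variable whose law is normalised Haar measure on $G$, then $X$ is $K$-Gaussian and $G=\{x\in E:|T(x)|\le\|T(X)\|_\infty\ \text{for all }T\in E^*\}$.
   Context: $K$ is a local field (locally compact, non-discrete, totally disconnected topological field) with its non-archimedean absolute value $|\cdot|$ ($|x|=0\iff x=0$, $|xy|=|x||y|$, $|x+y|\le|x|\vee|y|$); $D=\{x\in K:|x|\le1\}$. A normed space over $K$ is a $K$-vector space $E$ with $\|\cdot\|:E\to[0,\infty)$, $\|x\|=0\iff x=0$, $\|\alpha x\|=|\alpha|\|x\|$, $\|x+y\|\le\|x\|\vee\|y\|$; a Banach space if complete. $E^*$ is the space of continuous $K$-linear functionals $E\to K$. For a $K$-valued random variable $Y$, $\|Y\|_\infty$ is the essential supremum of $|Y|$. $K^2$ is normed by $|(x_1,x_2)|=|x_1|\vee|x_2|$; $v_1,v_2\in K^2$ are orthonormal if $|v_1|=|v_2|=1$ and $|\alpha_1v_1+\alpha_2v_2|=|\alpha_1|\vee|\alpha_2|$ for all $\alpha_i\in K$. An $E$-valued random variable $X$ is $K$-Gaussian if whenever $X_1,X_2$ are independent copies of $X$ and $(\alpha_{11},\alpha_{12}),(\alpha_{21},\alpha_{22})\in K^2$ are orthonormal, $(\alpha_{11}X_1+\alpha_{12}X_2,\alpha_{21}X_1+\alpha_{22}X_2)$ has the same law as $(X_1,X_2)$. *)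

theory Defs
  imports "HOL-Analysis.Analysis" "HOL-Probability.Probability"
begin

definition nonarch_absval :: "('k::{field,metric_space} \<Rightarrow> real) \<Rightarrow> bool" where
  "nonarch_absval av \<longleftrightarrow>
     (\<forall>x. av x \<ge> 0) \<and> (\<forall>x. av x = 0 \<longleftrightarrow> x = 0) \<and>
     (\<forall>x y. av (x * y) = av x * av y) \<and> (\<forall>x y. av (x + y) \<le> max (av x) (av y)) \<and>
     (\<forall>x y. dist x y = av (x - y))"

definition local_field :: "('k::{field,metric_space} \<Rightarrow> real) \<Rightarrow> bool" where
  "local_field av \<longleftrightarrow> nonarch_absval av \<and>
     locally_compact_space (euclidean :: 'k topology) \<and>
     \<not> open {0::'k} \<and>
     (\<forall>S::'k set. connected S \<longrightarrow> (\<exists>a. S \<subseteq> {a}))"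

definition separable_banach ::
  "('k::{field,metric_space} \<Rightarrow> real) \<Rightarrow> ('k \<Rightarrow> 'e::{ab_group_add,metric_space} \<Rightarrow> 'e)
    \<Rightarrow> ('e \<Rightarrow> real) \<Rightarrow> bool" where
  "separable_banach av sc nrm \<longleftrightarrow>
     vector_space sc \<and>
     (\<forall>x. nrm x \<ge> 0) \<and> (\<forall>x. nrm x = 0 \<longleftrightarrow> x = 0) \<and>
     (\<forall>a x. nrm (sc a x) = av a * nrm x) \<and>
     (\<forall>x y. nrm (x + y) \<le> max (nrm x) (nrm y)) \<and>
     (\<forall>x y. dist x y = nrm (x - y)) \<and>
     Topological_Spaces.complete (UNIV :: 'e set) \<and>
     separable_space (euclidean :: 'e topology)"

text \<open>D = closed unit ball of K; D-submodule.\<close>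
definition D_submodule ::
  "('k::{field,metric_space} \<Rightarrow> real) \<Rightarrow> ('k \<Rightarrow> 'e::ab_group_add \<Rightarrow> 'e) \<Rightarrow> 'e set \<Rightarrow> bool" where
  "D_submodule av sc G \<longleftrightarrow> 0 \<in> G \<and> (\<forall>x\<in>G. \<forall>y\<in>G. x + y \<in> G) \<and>
     (\<forall>a x. av a \<le> 1 \<longrightarrow> x \<in> G \<longrightarrow> sc a x \<in> G)"

definition dual_elem ::
  "('k::{field,metric_space} \<Rightarrow> 'e::{ab_group_add,metric_space} \<Rightarrow> 'e) \<Rightarrow> ('e \<Rightarrow> 'k) \<Rightarrow> bool" where
  "dual_elem sc T \<longleftrightarrow> Vector_Spaces.linear sc (*) T \<and> continuous_on UNIV T"

definition normalised_haar :: "'e::{ab_group_add,metric_space} set \<Rightarrow> 'e measure \<Rightarrow> bool" where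
  "normalised_haar G \<mu> \<longleftrightarrow> sets \<mu> = sets borel \<and> emeasure \<mu> G = 1 \<and> emeasure \<mu> UNIV = 1 \<and>
     (\<forall>g\<in>G. \<forall>A\<in>sets borel. A \<subseteq> G \<longrightarrow> emeasure \<mu> ((\<lambda>x. g + x) ` A) = emeasure \<mu> A)"

definition norm2 :: "('k \<Rightarrow> real) \<Rightarrow> 'k \<times> 'k \<Rightarrow> real" where
  "norm2 av v = max (av (fst v)) (av (snd v))"

definition orthonormal2 :: "('k::field \<Rightarrow> real) \<Rightarrow> 'k \<times> 'k \<Rightarrow> 'k \<times> 'k \<Rightarrow> bool" where
  "orthonormal2 av v1 v2 \<longleftrightarrow> norm2 av v1 = 1 \<and> norm2 av v2 = 1 \<and>
     (\<forall>b1 b2. norm2 av (b1 * fst v1 + b2 * fst v2, b1 * snd v1 + b2 * snd v2) = max (av b1) (av b2))"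

text \<open>K-Gaussian: for independent copies X1, X2 of X (joint law = L \<otimes> L, L the law of X)
  and orthonormal (a11,a12),(a21,a22), the pair (a11 X1 + a12 X2, a21 X1 + a22 X2) has law L \<otimes> L.\<close>
definition K_gaussian ::
  "('k::{field,metric_space} \<Rightarrow> real) \<Rightarrow> ('k \<Rightarrow> 'e::{ab_group_add,metric_space} \<Rightarrow> 'e)
    \<Rightarrow> 'w measure \<Rightarrow> ('w \<Rightarrow> 'e) \<Rightarrow> bool" where
  "K_gaussian av sc M X \<longleftrightarrow>
     (let L = distr M borel X in
      \<forall>a11 a12 a21 a22. orthonormal2 av (a11, a12) (a21, a22) \<longrightarrow>
        distr (L \<Otimes>\<^sub>M L) (borel \<Otimes>\<^sub>M borel)
          (\<lambda>(x, y). (sc a11 x + sc a12 y, sc a21 x + sc a22 y)) = L \<Otimes>\<^sub>M L)"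

end

theory Submission
  imports Defs
begin


section \<open>Absolute values\<close>

lemma na_facts:
  fixes av :: "'k::{field,metric_space} \<Rightarrow> real"
  assumes na: "nonarch_absval av"
  shows "av x \<ge> 0" "av x = 0 \<longleftrightarrow> x = 0" "av (x * y) = av x * av y"
    "av (x + y) \<le> max (av x) (av y)" "dist x y = av (x - y)"
  using na unfolding nonarch_absval_def by auto

lemma na_simps:
  fixes av :: "'k::{field,metric_space} \<Rightarrow> real"
  assumes na: "nonarch_absval av"
  shows "av 0 = 0" "av 1 = 1" "av (-1) = 1" "av (- x) = av x"
    "av (x - y) = av (y - x)" "av (inverse x) = inverse (av x)"
    "av (x / y) = av x / av y" "av (x ^ n) = av x ^ n" "av (x * y) = av x * av y"
proof -
  note f = na_facts[OF na]
  show a0: "av 0 = 0" using f by simp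
  show a1: "av 1 = 1"
  proof -
    have "av 1 = av 1 * av 1" using f(3)[of 1 1] by simp
    moreover have "av 1 \<noteq> 0" using f(2) by simp
    ultimately show ?thesis by (metis mult_cancel_left1)
  qed
  show am1: "av (-1) = 1"
  proof -
    have "av (-1) * av (-1) = 1" using f(3)[of "-1" "-1"] a1 by simp
    then show ?thesis using f(1)[of "-1"]
      by (metis abs_of_nonneg mult_cancel_right1 mult_eq_1 real_sqrt_abs2 real_sqrt_mult_self)
  qed
  show am: "av (- x) = av x" for x
    using f(3)[of "-1" x] am1 by simp
  show "av (x - y) = av (y - x)" by (metis am minus_diff_eq)
  show ai: "av (inverse x) = inverse (av x)" for x
  proof (cases "x = 0")
    case False
    then have "av (inverse x) * av x = 1" using f(3)[of "inverse x" x] a1 by simp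
    then show ?thesis by (metis inverse_unique mult.commute)
  qed (simp add: a0)
  show "av (x / y) = av x / av y"
    by (simp add: divide_inverse f(3) ai)
  show "av (x ^ n) = av x ^ n"
    by (induction n) (auto simp: f(3) a1)
  show "av (x * y) = av x * av y" by (rule f(3))
qed

lemma na_diff:
  fixes av :: "'k::{field,metric_space} \<Rightarrow> real"
  assumes na: "nonarch_absval av"
  shows "av (x - y) \<le> max (av x) (av y)"
  using na_facts(4)[OF na, of x "-y"] na_simps[OF na] by simp

lemma na_pos:
  fixes av :: "'k::{field,metric_space} \<Rightarrow> real"
  assumes na: "nonarch_absval av" and "x \<noteq> 0"
  shows "av x > 0"
  using na_facts(1,2)[OF na, of x] assms(2) by linarith

lemma na_continuous:
  fixes av :: "'k::{field,metric_space} \<Rightarrow> real"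
  assumes na: "nonarch_absval av"
  shows "continuous_on UNIV av"
proof -
  note f = na_facts[OF na] and s = na_simps[OF na]
  have *: "\<bar>av x - av y\<bar> \<le> dist x y" for x y
  proof -
    have "av x \<le> max (av (x - y)) (av y)" using f(4)[of "x - y" y] by simp
    moreover have "av y \<le> max (av (y - x)) (av x)" using f(4)[of "y - x" x] by simp
    ultimately have "av x - av y \<le> dist x y" "av y - av x \<le> dist x y"
      using s(5)[of x y] f(5)[of x y] f(1)[of "x - y"] f(1)[of x] f(1)[of y] by (auto simp: max_def split: if_splits)
    then show ?thesis by (simp add: abs_le_iff)
  qed
  show ?thesis
    unfolding continuous_on_iff dist_real_def
  proof (intro ballI allI impI)
    fix x and e :: real assume "e > 0"
    then show "\<exists>d>0. \<forall>x'\<in>UNIV. dist x' x < d \<longrightarrow> \<bar>av x' - av x\<bar> < e"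
      using * by (intro exI[of _ e]) (auto intro: le_less_trans)
  qed
qed

lemma na_continuous_affine:
  fixes av :: "'k::{field,metric_space} \<Rightarrow> real"
    and c a :: 'k
  assumes na: "nonarch_absval av"
  shows "continuous_on UNIV (\<lambda>y. c + a * y)"
proof -
  note f = na_facts[OF na] and s = na_simps[OF na]
  have dd: "dist (c + a * y) (c + a * y') = av a * dist y y'" for y y'
    by (simp add: f(5) s(9)[symmetric] right_diff_distrib)
  show ?thesis unfolding continuous_on_iff
  proof (intro ballI allI impI)
    fix x and e::real assume e: "0 < e"
    show "\<exists>d>0. \<forall>x'\<in>UNIV. dist x' x < d \<longrightarrow> dist (c + a * x') (c + a * x) < e"
    proof (cases "a = 0")
      case True then show ?thesis using e by (auto intro!: exI[of _ 1])
    next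
      case False
      then have "av a > 0" using na_pos[OF na] by blast
      show ?thesis
      proof (intro exI[of _ "e / av a"] conjI ballI impI)
        show "e / av a > 0" using e \<open>av a > 0\<close> by simp
        fix x' assume "dist x' x < e / av a"
        then have "av a * dist x' x < e" using \<open>av a > 0\<close> by (simp add: pos_less_divide_eq mult.commute)
        then show "dist (c + a * x') (c + a * x) < e" using dd[of x' x] by simp
      qed
    qed
  qed
qed

lemma na_cball:
  fixes av :: "'k::{field,metric_space} \<Rightarrow> real"
  assumes na: "nonarch_absval av"
  shows "cball c r = {y. av (c - y) \<le> r}"
  by (auto simp: cball_def na_facts(5)[OF na])

section \<open>Local fields\<close>

lemma lf_na:
  fixes av :: "'k::{field,metric_space} \<Rightarrow> real"
  assumes lf: "local_field av" shows "nonarch_absval av"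
  using lf unfolding local_field_def by auto

lemma lf_small:
  fixes av :: "'k::{field,metric_space} \<Rightarrow> real"
  assumes lf: "local_field av"
  shows "\<exists>b. 0 < av b \<and> av b < 1"
proof -
  note na = lf_na[OF lf]
  have "\<not> open {0::'k}" using lf unfolding local_field_def by auto
  then obtain b :: 'k where "b \<noteq> 0" "dist b 0 < 1"
    unfolding open_dist by (metis singleton_iff zero_less_one)
  then show ?thesis using na_pos[OF na] na_facts(5)[OF na] by (intro exI[of _ b]) auto
qed

lemma lf_smaller:
  fixes av :: "'k::{field,metric_space} \<Rightarrow> real"
  assumes lf: "local_field av" and "e > 0"
  shows "\<exists>a. 0 < av a \<and> av a < e"
proof -
  note na = lf_na[OF lf]
  obtain b where b: "0 < av b" "av b < 1" using lf_small[OF lf] by blast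
  obtain n where "av b ^ n < e" using real_arch_pow_inv[OF assms(2) b(2)] by blast
  then show ?thesis using b by (intro exI[of _ "b ^ n"]) (auto simp: na_simps[OF na])
qed

lemma lf_large:
  fixes av :: "'k::{field,metric_space} \<Rightarrow> real"
  assumes lf: "local_field av"
  shows "\<exists>a. av a \<ge> R"
proof -
  note na = lf_na[OF lf]
  have "0 < 1 / max R 1" by simp
  then obtain b where b: "0 < av b" "av b < 1 / (max R 1)"
    using lf_smaller[OF lf] by blast
  have "av b * max R 1 < 1" using b(2) by (simp add: pos_less_divide_eq)
  then have "max R 1 \<le> 1 / av b" using b(1)
    by (metis less_imp_le mult.commute pos_le_divide_eq)
  then have "inverse (av b) \<ge> max R 1" by (simp add: divide_inverse)
  then show ?thesis by (intro exI[of _ "inverse b"]) (auto simp: na_simps[OF na])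
qed

lemma lf_compact_cball0:
  fixes av :: "'k::{field,metric_space} \<Rightarrow> real"
  assumes lf: "local_field av"
  shows "\<exists>e>0. compact (cball (0::'k) e)"
proof -
  have "locally_compact_space (euclidean :: 'k topology)" using lf unfolding local_field_def by auto
  then have "\<exists>U K. open U \<and> compact K \<and> (0::'k) \<in> U \<and> U \<subseteq> K"
    unfolding locally_compact_space_def by auto
  then obtain U K where UK: "open U" "compact K" "(0::'k) \<in> U" "U \<subseteq> K"
    by blast
  then obtain e where e: "e > 0" "ball 0 e \<subseteq> U" using open_contains_ball by blast
  then have "cball 0 (e/2) \<subseteq> K" using UK by (auto simp: subset_iff)
  then have "compact (cball (0::'k) (e/2))"
    using UK(2) closed_cball compact_Int_closed[of K "cball 0 (e/2)"] by (simp add: Int_absorb1)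
  then show ?thesis using e by (intro exI[of _ "e/2"]) auto
qed

lemma lf_compact_cball:
  fixes av :: "'k::{field,metric_space} \<Rightarrow> real"
  assumes lf: "local_field av"
  shows "compact (cball (c::'k) r)"
proof -
  note na = lf_na[OF lf]
  note f = na_facts[OF na] and s = na_simps[OF na]
  obtain e where e: "e > 0" "compact (cball (0::'k) e)" using lf_compact_cball0[OF lf] by blast
  obtain a where a: "av a \<ge> r / e" using lf_large[OF lf] by blast
  have "cball c r \<subseteq> (\<lambda>y. c + a * y) ` cball 0 e"
  proof
    fix y assume y: "y \<in> cball c r"
    show "y \<in> (\<lambda>y. c + a * y) ` cball 0 e"
    proof (cases "y = c")
      case True then show ?thesis using e by (auto intro!: image_eqI[of _ _ 0])
    next
      case False
      then have cy: "av (c - y) > 0" using na_pos[OF na] by force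
      moreover have cyr: "av (c - y) \<le> r" using y by (simp add: na_cball[OF na])
      ultimately have a0: "a \<noteq> 0" using a e s(1) by (auto simp: field_simps)
      then have ap: "av a > 0" using na_pos[OF na] by blast
      have "av (0 - (y - c) / a) = av (c - y) / av a"
        by (simp add: s)
      also have "\<dots> \<le> e"
      proof -
        have "r \<le> av a * e" using a e by (simp add: field_simps)
        then show ?thesis using ap cyr by (simp add: field_simps)
      qed
      finally show ?thesis using a0 by (intro image_eqI[of _ _ "(y - c) / a"]) (auto simp: na_cball[OF na])
    qed
  qed
  moreover have "compact ((\<lambda>y. c + a * y) ` cball 0 e)"
    using e(2) na_continuous_affine[OF na] by (intro compact_continuous_image) (auto intro: continuous_on_subset)
  ultimately show ?thesis
    by (metis closed_cball compact_Int_closed inf.absorb_iff2)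
qed



lemma lf_uniformizer:
  fixes av :: "'k::{field,metric_space} \<Rightarrow> real"
  assumes lf: "local_field av"
  shows "\<exists>p. 0 < av p \<and> av p < 1 \<and> (\<forall>a. av a < 1 \<longrightarrow> av a \<le> av p)"
proof -
  note na = lf_na[OF lf]
  note f = na_facts[OF na] and s = na_simps[OF na]
  let ?m = "{a::'k. av a < 1}"
  have "open {a::'k. av a \<ge> 1}"
    unfolding open_dist
  proof (intro ballI exI[of _ 1] conjI allI impI)
    fix b y :: 'k assume b: "b \<in> {a. av a \<ge> 1}" and y: "dist y b < 1"
    have "av b \<le> max (av y) (av (b - y))" using f(4)[of y "b - y"] by simp
    moreover have "av (b - y) < 1" using y f(5)[of y b] s(5)[of y b] by simp
    ultimately show "y \<in> {a. av a \<ge> 1}" using b by (auto simp: max_def split: if_splits)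
  qed simp
  then have "closed ?m"
    by (metis (no_types, lifting) Collect_cong closed_def compl_le_swap1 Compl_eq not_le order_refl
        mem_Collect_eq closed_Collect_le)
  moreover have "?m \<subseteq> cball 0 1"
  proof
    fix y assume "y \<in> ?m"
    then show "y \<in> cball 0 1" using s(4)[of y] by (simp add: na_cball[OF na])
  qed
  ultimately have "compact ?m"
    using lf_compact_cball[OF lf, of 0 1] by (metis compact_Int_closed inf.absorb_iff2)
  then have "compact (av ` ?m)"
    using na_continuous[OF na] by (intro compact_continuous_image) (auto intro: continuous_on_subset)
  moreover have "av ` ?m \<noteq> {}" using s(1) by (metis (mono_tags, lifting) empty_iff imageI mem_Collect_eq zero_less_one)
  ultimately obtain t where t: "t \<in> av ` ?m" "\<forall>y\<in>av ` ?m. y \<le> t"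
    using compact_attains_sup by blast
  then obtain p where p: "av p < 1" "t = av p" by auto
  obtain b where b: "0 < av b" "av b < 1" using lf_small[OF lf] by blast
  then have "av b \<le> av p" using t p by auto
  then show ?thesis using p t b by (intro exI[of _ p]) auto
qed

lemma lf_spherical:
  fixes av :: "'k::{field,metric_space} \<Rightarrow> real"
  assumes lf: "local_field av" and I: "I \<noteq> {}"
    and pw: "\<And>i j. i \<in> I \<Longrightarrow> j \<in> I \<Longrightarrow> av (c i - c j) \<le> max (r i) (r j)"
  shows "\<exists>y. \<forall>i\<in>I. av (y - c i) \<le> r i"
proof -
  note na = lf_na[OF lf]
  note f = na_facts[OF na] and s = na_simps[OF na]
  obtain i0 where i0: "i0 \<in> I" using I by blast
  let ?S = "cball (c i0) (r i0)"
  let ?F = "(\<lambda>i. cball (c i) (r i)) ` I"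
  have "?S \<inter> \<Inter>?F \<noteq> {}"
  proof (rule compact_imp_fip)
    show "compact ?S" by (rule lf_compact_cball[OF lf])
    show "closed T" if "T \<in> ?F" for T using that by auto
    fix F' assume F': "finite F'" "F' \<subseteq> ?F"
    then obtain J where J: "J \<subseteq> I" "finite J" "F' = (\<lambda>i. cball (c i) (r i)) ` J"
      by (meson finite_subset_image)
    let ?J = "insert i0 J"
    have fin: "finite (r ` ?J)" "r ` ?J \<noteq> {}" using J by auto
    obtain m where m: "m \<in> ?J" "r m = Min (r ` ?J)" using Min_in[OF fin] by (metis (no_types, lifting) imageE)
    have mle: "r m \<le> r j" if "j \<in> ?J" for j by (metis Min_le fin(1) imageI m(2) that)
    have "c m \<in> cball (c j) (r j)" if "j \<in> ?J" for j
    proof -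
      have "av (c j - c m) \<le> max (r j) (r m)" using pw[of j m] that m J i0 by auto
      then show ?thesis using mle[OF that] by (simp add: na_cball[OF na] max_def split: if_splits)
    qed
    then show "?S \<inter> \<Inter>F' \<noteq> {}" using J by blast
  qed
  then obtain y where "y \<in> \<Inter>?F" by blast
  then have "av (c i - y) \<le> r i" if "i \<in> I" for i using that by (auto simp: na_cball[OF na])
  then show ?thesis by (metis s(5))
qed



definition hbset :: "('k::field \<Rightarrow> real) \<Rightarrow> ('k \<Rightarrow> 'e::ab_group_add \<Rightarrow> 'e) \<Rightarrow> 'e set \<Rightarrow> ('e \<times> 'k) set set" where
  "hbset av sc U = {\<Gamma>. (0,0) \<in> \<Gamma> \<and>
     (\<forall>v k w l. (v,k) \<in> \<Gamma> \<longrightarrow> (w,l) \<in> \<Gamma> \<longrightarrow> (v + w, k + l) \<in> \<Gamma>) \<and>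
     (\<forall>c v k. (v,k) \<in> \<Gamma> \<longrightarrow> (sc c v, c * k) \<in> \<Gamma>) \<and>
     (\<forall>v k a. (v,k) \<in> \<Gamma> \<longrightarrow> v \<in> sc a ` U \<longrightarrow> av k \<le> av a)}"

definition dmod :: "('k::field \<Rightarrow> real) \<Rightarrow> ('k \<Rightarrow> 'e::ab_group_add \<Rightarrow> 'e) \<Rightarrow> 'e set \<Rightarrow> bool" where
  "dmod av sc U \<longleftrightarrow> 0 \<in> U \<and> (\<forall>u\<in>U. \<forall>v\<in>U. u + v \<in> U) \<and> (\<forall>a u. av a \<le> 1 \<longrightarrow> u \<in> U \<longrightarrow> sc a u \<in> U)"

lemma dmod_sub:
  fixes av :: "'k::{field,metric_space} \<Rightarrow> real"
  assumes na: "nonarch_absval av" and vs: "vector_space sc" and U: "dmod av sc U"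
    and u: "u \<in> U" "u' \<in> U" and ab: "av a \<le> av b"
  shows "sc a u - sc b u' \<in> sc b ` U"
proof -
  interpret V: module sc using vs by (simp add: module_iff_vector_space)
  note s = na_simps[OF na]
  show ?thesis
  proof (cases "b = 0")
    case True
    then have "a = 0" using ab na_facts(1,2)[OF na, of a] s(1) by force
    then show ?thesis using True U unfolding dmod_def by (auto intro!: image_eqI[of _ _ 0])
  next
    case False
    have "av (a / b) \<le> 1" using ab False na_pos[OF na, of b] by (simp add: s(7) divide_le_eq_1)
    have Usc: "\<And>a u. av a \<le> 1 \<Longrightarrow> u \<in> U \<Longrightarrow> sc a u \<in> U" using U unfolding dmod_def by blast
    have "sc (a / b) u \<in> U" using Usc u \<open>av (a / b) \<le> 1\<close> by blast
    moreover have "sc (-1) u' \<in> U" using Usc[of "-1" u'] u s(3) by simp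
    ultimately have "sc (a / b) u + sc (-1) u' \<in> U" using U unfolding dmod_def by blast
    moreover have "sc b (sc (a / b) u + sc (-1) u') = sc a u - sc b u'"
      using False by (simp add: V.scale_right_diff_distrib)
    ultimately show ?thesis by (metis image_eqI)
  qed
qed

lemma dmod_scale_mono:
  fixes av :: "'k::{field,metric_space} \<Rightarrow> real"
  assumes na: "nonarch_absval av" and vs: "vector_space sc" and U: "dmod av sc U"
    and x: "x \<in> sc a ` U" and ab: "av a \<le> av b"
  shows "x \<in> sc b ` U"
proof -
  interpret V: module sc using vs by (simp add: module_iff_vector_space)
  obtain u where u: "u \<in> U" "x = sc a u" using x by blast
  have "sc a u - sc b 0 \<in> sc b ` U"
    using dmod_sub[OF na vs U u(1) _ ab] U unfolding dmod_def by blast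
  then show ?thesis using u by simp
qed

lemma hb_functional:
  fixes av :: "'k::{field,metric_space} \<Rightarrow> real"
  assumes na: "nonarch_absval av" and vs: "vector_space sc" and U: "dmod av sc U"
    and M: "M \<in> hbset av sc U" and vk: "(v,k) \<in> M" "(v,l) \<in> M"
  shows "k = l"
proof -
  interpret V: module sc using vs by (simp add: module_iff_vector_space)
  have "(sc (-1) v, (-1) * l) \<in> M" using M vk unfolding hbset_def by blast
  then have "(v + sc (-1) v, k + (-1) * l) \<in> M" using M vk unfolding hbset_def by blast
  then have "(0, k - l) \<in> M" by simp
  moreover have "0 \<in> sc 0 ` U" using U unfolding dmod_def by force
  ultimately have "av (k - l) \<le> av 0" using M unfolding hbset_def by blast
  then show ?thesis using na_facts(1,2)[OF na, of "k - l"] na_simps(1)[OF na] by simp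
qed

lemma hahn_banach:
  fixes av :: "'k::{field,metric_space} \<Rightarrow> real" and sc :: "'k \<Rightarrow> 'e::ab_group_add \<Rightarrow> 'e"
  assumes lf: "local_field av" and vs: "vector_space sc" and U: "dmod av sc U"
    and G0: "\<Gamma>0 \<in> hbset av sc U"
  shows "\<exists>T. (\<forall>x y. T (x + y) = T x + T y) \<and> (\<forall>a x. T (sc a x) = a * T x) \<and>
      (\<forall>x a. x \<in> sc a ` U \<longrightarrow> av (T x) \<le> av a) \<and> (\<forall>v k. (v,k) \<in> \<Gamma>0 \<longrightarrow> T v = k)"
proof -
  note na = lf_na[OF lf]
  note f = na_facts[OF na] and s = na_simps[OF na]
  interpret V: module sc using vs by (simp add: module_iff_vector_space)
  define A where "A = {\<Gamma>\<in>hbset av sc U. \<Gamma>0 \<subseteq> \<Gamma>}"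
  have "\<exists>M\<in>A. \<forall>X\<in>A. M \<subseteq> X \<longrightarrow> X = M"
  proof (rule Zorn_Lemma2, intro ballI)
    fix C assume C: "C \<in> chains A"
    then have CA: "C \<subseteq> A" and ch: "\<And>X Y. X \<in> C \<Longrightarrow> Y \<in> C \<Longrightarrow> X \<subseteq> Y \<or> Y \<subseteq> X"
      unfolding chains_def chain_subset_def by auto
    show "\<exists>U\<in>A. \<forall>X\<in>C. X \<subseteq> U"
    proof (cases "C = {}")
      case True then show ?thesis using G0 unfolding A_def by auto
    next
      case False
      have "\<Union>C \<in> A"
        unfolding A_def hbset_def
      proof (intro CollectI conjI allI impI)
        show "(0,0) \<in> \<Union>C" using False CA unfolding A_def hbset_def by blast
        show "\<Gamma>0 \<subseteq> \<Union>C" using False CA unfolding A_def by blast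
        fix v k w l assume "(v,k) \<in> \<Union>C" "(w,l) \<in> \<Union>C"
        then obtain X Y where XY: "X \<in> C" "Y \<in> C" "(v,k) \<in> X" "(w,l) \<in> Y" by blast
        then have "(v,k) \<in> X \<union> Y" "(w,l) \<in> X \<union> Y" "X \<union> Y \<in> C"
          using ch[OF XY(1,2)] by (auto simp: sup.absorb1 sup.absorb2)
        then show "(v + w, k + l) \<in> \<Union>C" using CA unfolding A_def hbset_def by blast
      next
        fix c v k assume "(v,k) \<in> \<Union>C"
        then show "(sc c v, c * k) \<in> \<Union>C" using CA unfolding A_def hbset_def by blast
      next
        fix v k a assume "(v,k) \<in> \<Union>C" "v \<in> sc a ` U"
        then show "av k \<le> av a" using CA unfolding A_def hbset_def by blast
      qed
      then show ?thesis by blast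
    qed
  qed
  then obtain M where MA: "M \<in> A" and Mmax: "\<And>X. X \<in> A \<Longrightarrow> M \<subseteq> X \<Longrightarrow> X = M" by blast
  have Mh: "M \<in> hbset av sc U" and G0M: "\<Gamma>0 \<subseteq> M" using MA unfolding A_def by auto
  have M0: "(0,0) \<in> M"
    and Madd: "\<And>v k w l. (v,k) \<in> M \<Longrightarrow> (w,l) \<in> M \<Longrightarrow> (v + w, k + l) \<in> M"
    and Msc: "\<And>c v k. (v,k) \<in> M \<Longrightarrow> (sc c v, c * k) \<in> M"
    and Mb: "\<And>v k a. (v,k) \<in> M \<Longrightarrow> v \<in> sc a ` U \<Longrightarrow> av k \<le> av a"
    using Mh unfolding hbset_def by blast+
  have total: "\<exists>k. (z,k) \<in> M" for z
  proof (rule ccontr)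
    assume nz: "\<nexists>k. (z, k) \<in> M"
    define I where "I = {(v,k,a). (v,k) \<in> M \<and> v + z \<in> sc a ` U}"
    have "\<exists>c. \<forall>v k a. (v,k) \<in> M \<longrightarrow> v + z \<in> sc a ` U \<longrightarrow> av (c + k) \<le> av a"
    proof (cases "I = {}")
      case True then show ?thesis unfolding I_def by auto
    next
      case False
      have pw: "av ((\<lambda>(v,k,a). - k) i - (\<lambda>(v,k,a). - k) j) \<le> max ((\<lambda>(v,k,a). av a) i) ((\<lambda>(v,k,a). av a) j)"
        if "i \<in> I" "j \<in> I" for i j
      proof -
        have key: "av (k - l) \<le> av b"
          if kh: "(v,k) \<in> M" "(w,l) \<in> M" "v + z \<in> sc a ` U" "w + z \<in> sc b ` U" "av a \<le> av b"
          for v k w l a b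
        proof -
          obtain u where "u \<in> U" "v + z = sc a u" using kh(3) by blast
          moreover obtain u' where "u' \<in> U" "w + z = sc b u'" using kh(4) by blast
          ultimately have uu: "u \<in> U" "u' \<in> U" "v + z = sc a u" "w + z = sc b u'" by auto
          have "sc a u - sc b u' \<in> sc b ` U" by (rule dmod_sub[OF na vs U uu(1,2) kh(5)])
          moreover have "sc a u - sc b u' = v + sc (-1) w" using uu(3,4)
            by (simp add: algebra_simps) (metis add.commute add.left_commute)
          ultimately have "v + sc (-1) w \<in> sc b ` U" by simp
          moreover have "(v + sc (-1) w, k + (-1) * l) \<in> M" using kh Madd Msc by blast
          ultimately show ?thesis using Mb by force
        qed
        obtain v k a w l b where ij: "i = (v,k,a)" "j = (w,l,b)" by (cases i, cases j) auto
        have h: "(v,k) \<in> M" "(w,l) \<in> M" "v + z \<in> sc a ` U" "w + z \<in> sc b ` U"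
          using that ij unfolding I_def by auto
        show ?thesis
        proof (cases "av a \<le> av b")
          case True then show ?thesis using key[OF h True] ij by (simp add: s(5))
        next
          case False
          then show ?thesis using key[OF h(2,1,4,3)] ij by (simp add: s(5))
        qed
      qed
      obtain y where y: "\<forall>i\<in>I. av (y - (\<lambda>(v,k,a). - k) i) \<le> (\<lambda>(v,k,a). av a) i"
        using lf_spherical[OF lf False, where c="\<lambda>(v,k,a). - k" and r="\<lambda>(v,k,a). av a", OF pw] by blast
      show ?thesis
      proof (intro exI[of _ y] allI impI)
        fix v k a assume "(v,k) \<in> M" "v + z \<in> sc a ` U"
        then have "(v,k,a) \<in> I" unfolding I_def by auto
        then show "av (y + k) \<le> av a" using y by fastforce
      qed
    qed
    then obtain c where c: "\<And>v k a. (v,k) \<in> M \<Longrightarrow> v + z \<in> sc a ` U \<Longrightarrow> av (c + k) \<le> av a"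
      by blast
    define M' where "M' = {(v + sc t z, k + t * c) | v k t. (v,k) \<in> M}"
    have MM': "M \<subseteq> M'"
    proof (clarify)
      fix v k assume "(v,k) \<in> M"
      then show "(v,k) \<in> M'" unfolding M'_def
        by (intro CollectI exI[of _ v] exI[of _ k] exI[of _ 0]) simp
    qed
    have zM': "(z, c) \<in> M'" unfolding M'_def using M0
      by (intro CollectI exI[of _ 0] exI[of _ 0] exI[of _ 1]) simp
    have "M' \<in> A"
      unfolding A_def hbset_def
    proof (intro CollectI conjI allI impI)
      show "(0,0) \<in> M'" using MM' M0 by blast
      show "\<Gamma>0 \<subseteq> M'" using MM' G0M by blast
      fix v k w l assume "(v,k) \<in> M'" "(w,l) \<in> M'"
      then obtain v1 k1 t1 v2 k2 t2 where h: "(v1,k1) \<in> M" "(v2,k2) \<in> M"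
        "v = v1 + sc t1 z" "k = k1 + t1 * c" "w = v2 + sc t2 z" "l = k2 + t2 * c"
        unfolding M'_def by blast
      have "(v1 + v2, k1 + k2) \<in> M" using Madd h by blast
      moreover have "v + w = (v1 + v2) + sc (t1 + t2) z" "k + l = (k1 + k2) + (t1 + t2) * c"
        using h by (simp_all add: algebra_simps)
      ultimately show "(v + w, k + l) \<in> M'" unfolding M'_def by blast
    next
      fix d v k assume "(v,k) \<in> M'"
      then obtain v1 k1 t1 where h: "(v1,k1) \<in> M" "v = v1 + sc t1 z" "k = k1 + t1 * c"
        unfolding M'_def by blast
      have "(sc d v1, d * k1) \<in> M" using Msc h by blast
      moreover have "sc d v = sc d v1 + sc (d * t1) z" "d * k = d * k1 + (d * t1) * c"
        using h by (simp_all add: algebra_simps)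
      ultimately show "(sc d v, d * k) \<in> M'" unfolding M'_def by blast
    next
      fix v k a assume vk: "(v,k) \<in> M'" and va: "v \<in> sc a ` U"
      then obtain v1 k1 t where h: "(v1,k1) \<in> M" "v = v1 + sc t z" "k = k1 + t * c"
        unfolding M'_def by blast
      show "av k \<le> av a"
      proof (cases "t = 0")
        case True then show ?thesis using h va Mb by simp
      next
        case False
        have h1: "(sc (1/t) v1, (1/t) * k1) \<in> M" using Msc h by blast
        obtain u where u: "u \<in> U" "v = sc a u" using va by blast
        have "sc (a / t) u = sc (1/t) (sc a u)" by simp
        also have "\<dots> = sc (1/t) (v1 + sc t z)" using h u by simp
        also have "\<dots> = sc (1/t) v1 + z" using False by (simp add: V.scale_right_distrib)
        finally have "sc (1/t) v1 + z = sc (a / t) u" by simp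
        then have "sc (1/t) v1 + z \<in> sc (a/t) ` U" using u by blast
        then have "av (c + (1/t) * k1) \<le> av (a / t)" using c h1 by blast
        then have "av t * av (c + (1/t) * k1) \<le> av a"
          using False na_pos[OF na, of t] by (simp add: s(7) field_simps)
        moreover have "t * (c + (1/t) * k1) = k" using h False by (simp add: algebra_simps)
        ultimately show ?thesis by (metis s(9))
      qed
    qed
    then have "M' = M" using Mmax MM' by blast
    then show False using zM' nz by blast
  qed
  define T where "T y = (SOME k. (y,k) \<in> M)" for y
  have TM: "(y, T y) \<in> M" for y unfolding T_def using total by (metis someI_ex)
  have Tu: "(y, k) \<in> M \<Longrightarrow> T y = k" for y k
    using hb_functional[OF na vs U Mh TM] by blast
  show ?thesis
  proof (intro exI[of _ T] conjI allI impI)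
    fix x y show "T (x + y) = T x + T y" using Tu Madd TM by blast
  next
    fix a x show "T (sc a x) = a * T x" using Tu Msc TM by blast
  next
    fix x a assume "x \<in> sc a ` U" then show "av (T x) \<le> av a" using Mb TM by blast
  next
    fix v k assume "(v,k) \<in> \<Gamma>0" then show "T v = k" using Tu G0M by blast
  qed
qed



lemma sb_facts:
  fixes av :: "'k::{field,metric_space} \<Rightarrow> real" and sc :: "'k \<Rightarrow> 'e::{ab_group_add,metric_space} \<Rightarrow> 'e"
  assumes sb: "separable_banach av sc nrm"
  shows "vector_space sc" "nrm x \<ge> 0" "nrm x = 0 \<longleftrightarrow> x = 0" "nrm (sc a x) = av a * nrm x"
    "nrm (x + y) \<le> max (nrm x) (nrm y)" "dist x y = nrm (x - y)"
  using sb unfolding separable_banach_def by auto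

lemma linear_fieldI:
  fixes sc :: "'k::field \<Rightarrow> 'e::ab_group_add \<Rightarrow> 'e"
  assumes vs: "vector_space sc" and add: "\<And>x y. T (x + y) = T x + T y" and sca: "\<And>a x. T (sc a x) = a * T x"
  shows "Vector_Spaces.linear sc (*) T"
proof -
  have v2: "vector_space ((*) :: 'k \<Rightarrow> 'k \<Rightarrow> 'k)"
    by (unfold_locales) (auto simp: algebra_simps)
  show ?thesis
    unfolding Vector_Spaces.linear_def module_hom_def module_hom_axioms_def
    using vs v2 add sca by (auto simp: module_iff_vector_space)
qed

lemma dual_elem_lin:
  fixes sc :: "'k::{field,metric_space} \<Rightarrow> 'e::{ab_group_add,metric_space} \<Rightarrow> 'e"
  assumes "dual_elem sc T"
  shows "T (x + y) = T x + T y" "T (sc a x) = a * T x" "continuous_on UNIV T"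
  using assms unfolding dual_elem_def Vector_Spaces.linear_def module_hom_def module_hom_axioms_def
  by auto

lemma separate:
  fixes av :: "'k::{field,metric_space} \<Rightarrow> real" and sc :: "'k \<Rightarrow> 'e::{ab_group_add,metric_space} \<Rightarrow> 'e"
  assumes lf: "local_field av" and sb: "separable_banach av sc nrm" and G: "compact G"
    and GD: "D_submodule av sc G" and x: "x \<notin> G"
  shows "\<exists>T. dual_elem sc T \<and> (\<forall>g\<in>G. av (T g) \<le> 1) \<and> av (T x) > 1"
proof -
  note na = lf_na[OF lf]
  note f = na_facts[OF na] and s = na_simps[OF na]
  note e = sb_facts[OF sb]
  have vs: "vector_space sc" by (rule e(1))
  interpret V: module sc using vs by (simp add: module_iff_vector_space)
  have G0: "0 \<in> G" and Gadd: "\<And>u v. u \<in> G \<Longrightarrow> v \<in> G \<Longrightarrow> u + v \<in> G"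
    and Gsc: "\<And>a u. av a \<le> 1 \<Longrightarrow> u \<in> G \<Longrightarrow> sc a u \<in> G"
    using GD unfolding D_submodule_def by auto
  have "open (- G)" using compact_imp_closed[OF G] by (simp add: open_Compl)
  then obtain r where r: "r > 0" "ball x r \<subseteq> - G" using x by (meson ComplI open_contains_ball_eq)
  define \<rho> where "\<rho> = r / 2"
  have \<rho>: "\<rho> > 0" "\<rho> < r" using r unfolding \<rho>_def by auto
  define U where "U = {g + b | g b. g \<in> G \<and> nrm b \<le> \<rho>}"
  have U: "dmod av sc U"
    unfolding dmod_def
  proof (intro conjI ballI allI impI)
    show "0 \<in> U" unfolding U_def using G0 e(3)[of 0] \<rho> by force
    fix u v assume "u \<in> U" "v \<in> U"
    then obtain g1 b1 g2 b2 where h: "g1 \<in> G" "g2 \<in> G" "nrm b1 \<le> \<rho>" "nrm b2 \<le> \<rho>" "u = g1 + b1" "v = g2 + b2"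
      unfolding U_def by blast
    have "u + v = (g1 + g2) + (b1 + b2)" using h by (simp add: algebra_simps)
    moreover have "nrm (b1 + b2) \<le> \<rho>" using e(5)[of b1 b2] h by simp
    ultimately show "u + v \<in> U" unfolding U_def using Gadd h by blast
  next
    fix a u assume a: "av a \<le> 1" and "u \<in> U"
    then obtain g b where h: "g \<in> G" "nrm b \<le> \<rho>" "u = g + b" unfolding U_def by blast
    have "sc a u = sc a g + sc a b" using h by (simp add: V.scale_right_distrib)
    moreover have "nrm (sc a b) \<le> \<rho>" using e(4)[of a b] a h e(2)[of b] \<rho>
      by (simp add: mult_le_one order_trans[OF mult_right_mono[OF a]])
    ultimately show "sc a u \<in> U" unfolding U_def using Gsc[OF a h(1)] by blast
  qed
  have Usc: "\<And>a u. av a \<le> 1 \<Longrightarrow> u \<in> U \<Longrightarrow> sc a u \<in> U" using U unfolding dmod_def by blast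
  have xU: "x \<notin> U"
  proof
    assume "x \<in> U"
    then obtain g b where h: "g \<in> G" "nrm b \<le> \<rho>" "x = g + b" unfolding U_def by blast
    moreover have "nrm (- b) = nrm b" using e(4)[of "-1" b] s(3) by simp
    ultimately have "dist g x < r" using e(6)[of g x] \<rho> by simp
    then show False using r h by (auto simp: dist_commute subset_iff)
  qed
  have GU: "g \<in> U" if "g \<in> G" for g
    unfolding U_def using that e(3)[of 0] \<rho> by (intro CollectI exI[of _ g] exI[of _ 0]) simp
  obtain p where p: "0 < av p" "av p < 1" "\<And>a. av a < 1 \<Longrightarrow> av a \<le> av p"
    using lf_uniformizer[OF lf] by blast
  have p0: "p \<noteq> 0" using p(1) s(1) by auto
  define lam where "lam = inverse p"
  have avlam: "av lam = 1 / av p" unfolding lam_def by (simp add: s(6) divide_inverse)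
  define \<Gamma>0 where "\<Gamma>0 = {(sc t x, t * lam) | t. True}"
  have x0: "x \<noteq> 0" using x G0 by auto
  have G0h: "\<Gamma>0 \<in> hbset av sc U"
    unfolding hbset_def
  proof (intro CollectI conjI allI impI)
    show "(0, 0) \<in> \<Gamma>0" unfolding \<Gamma>0_def by (intro CollectI exI[of _ 0]) simp
    fix v k w l assume "(v, k) \<in> \<Gamma>0" "(w, l) \<in> \<Gamma>0"
    then obtain t1 t2 where "v = sc t1 x" "k = t1 * lam" "w = sc t2 x" "l = t2 * lam"
      unfolding \<Gamma>0_def by blast
    then show "(v + w, k + l) \<in> \<Gamma>0" unfolding \<Gamma>0_def
      by (intro CollectI exI[of _ "t1 + t2"]) (simp add: algebra_simps)
  next
    fix c v k assume "(v, k) \<in> \<Gamma>0"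
    then obtain t where "v = sc t x" "k = t * lam" unfolding \<Gamma>0_def by blast
    then show "(sc c v, c * k) \<in> \<Gamma>0" unfolding \<Gamma>0_def
      by (intro CollectI exI[of _ "c * t"]) (simp add: algebra_simps)
  next
    fix v k a assume vk: "(v, k) \<in> \<Gamma>0" and va: "v \<in> sc a ` U"
    then obtain t where t: "v = sc t x" "k = t * lam" unfolding \<Gamma>0_def by blast
    obtain u where u0: "u \<in> U" "v = sc a u" using va by (auto elim!: imageE)
    then have u: "u \<in> U" "sc t x = sc a u" using t by auto
    show "av k \<le> av a"
    proof (cases "t = 0")
      case True then show ?thesis using t f(1) s(1) by simp
    next
      case False
      have xu: "x = sc (a / t) u"
      proof -
        have "x = sc (1/t) (sc t x)" using False by simp
        also have "\<dots> = sc (a / t) u" using u by simp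
        finally show ?thesis .
      qed
      have "\<not> av (a / t) < 1 / av p"
      proof
        assume "av (a / t) < 1 / av p"
        then have "av p * av (a / t) < 1" using p(1) by (simp add: pos_less_divide_eq mult.commute)
        then have "av (p * (a / t)) < 1" by (simp only: s(9))
        then have "av (p * (a / t)) \<le> av p" using p(3) by blast
        then have "av p * av (a / t) \<le> av p" by (simp only: s(9))
        then have "av (a / t) \<le> 1" using p(1) by simp
        then have "x \<in> U" using xu Usc u(1) by simp
        then show False using xU by simp
      qed
      then have "1 / av p \<le> av a / av t" by (simp add: s(7))
      then have "av t * (1 / av p) \<le> av t * (av a / av t)" by (rule mult_left_mono) (rule f(1))
      then have "av t / av p \<le> av a" using na_pos[OF na False] by simp
      then show ?thesis using t avlam by (simp add: s(9) divide_inverse)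
    qed
  qed
  from hahn_banach[OF lf vs U G0h] obtain T where
    TT: "(\<forall>x y. T (x + y) = T x + T y) \<and> (\<forall>a x. T (sc a x) = a * T x) \<and>
      (\<forall>x a. x \<in> sc a ` U \<longrightarrow> av (T x) \<le> av a) \<and> (\<forall>v k. (v,k) \<in> \<Gamma>0 \<longrightarrow> T v = k)"
    by blast
  have T: "\<And>x y. T (x + y) = T x + T y" "\<And>a x. T (sc a x) = a * T x"
    "\<And>x a. x \<in> sc a ` U \<Longrightarrow> av (T x) \<le> av a" "\<And>v k. (v,k) \<in> \<Gamma>0 \<Longrightarrow> T v = k"
    using TT by blast+
  have "(x, lam) \<in> \<Gamma>0" unfolding \<Gamma>0_def by (intro CollectI exI[of _ 1]) simp
  then have Tx: "T x = lam" by (rule T(4))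
  have TG: "av (T g) \<le> 1" if "g \<in> G" for g
  proof -
    have "sc 1 g \<in> sc 1 ` U" using GU[OF that] by (rule imageI)
    then have "g \<in> sc 1 ` U" by simp
    then have "av (T g) \<le> av 1" by (rule T(3))
    then show ?thesis using s(2) by simp
  qed
  have cont: "continuous_on UNIV T"
    unfolding continuous_on_iff
  proof (intro ballI allI impI)
    fix y0 and \<epsilon> :: real assume "\<epsilon> > 0"
    then obtain a where a: "0 < av a" "av a < \<epsilon>" using lf_smaller[OF lf] by blast
    have a0: "a \<noteq> 0" using a s(1) by auto
    show "\<exists>d>0. \<forall>y\<in>UNIV. dist y y0 < d \<longrightarrow> dist (T y) (T y0) < \<epsilon>"
    proof (intro exI[of _ "av a * \<rho>"] conjI ballI impI)
      show "av a * \<rho> > 0" using a \<rho> by simp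
      fix y assume "dist y y0 < av a * \<rho>"
      then have w: "nrm (y - y0) < av a * \<rho>" using e(6) by simp
      have "nrm (sc (1/a) (y - y0)) = 1 / av a * nrm (y - y0)"
        by (simp only: e(4) s(7) s(2))
      also have "\<dots> \<le> \<rho>" using w a by (simp add: pos_divide_le_eq mult.commute)
      finally have "nrm (sc (1/a) (y - y0)) \<le> \<rho>" .
      then have "sc (1/a) (y - y0) \<in> U" unfolding U_def using G0
        by (intro CollectI exI[of _ 0] exI[of _ "sc (1/a) (y - y0)"]) simp
      moreover have "sc a (sc (1/a) (y - y0)) = y - y0" using a0 by simp
      ultimately have "y - y0 \<in> sc a ` U" by (metis image_eqI)
      then have "av (T (y - y0)) \<le> av a" using T(3) by blast
      moreover have "T (y - y0) = T y - T y0" using T(1)[of "y - y0" y0] by simp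
      ultimately show "dist (T y) (T y0) < \<epsilon>" using a f(5) by simp
    qed
  qed
  have "dual_elem sc T" unfolding dual_elem_def
    using linear_fieldI[OF vs T(1,2)] cont by simp
  moreover have "av (T x) > 1" using Tx avlam p by simp
  ultimately show ?thesis using TG by blast
qed



lemma separable_dense:
  assumes "separable_space (euclidean :: 'a::metric_space topology)"
  obtains C :: "'a::metric_space set" where "countable C" "\<And>x e. e > 0 \<Longrightarrow> \<exists>d\<in>C. dist d x < e"
proof -
  obtain C :: "'a::metric_space set" where C: "countable C" "closure C = UNIV"
    using assms unfolding separable_space_def by auto
  then show ?thesis using that closure_approachable by blast
qed

lemma small_rat_ball:
  fixes x :: "'a::metric_space"
  assumes C: "\<And>x e. e > 0 \<Longrightarrow> \<exists>d\<in>C. dist d x < e" and e: "e > 0"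
  obtains d q where "d \<in> C" "q \<in> \<rat>" "q > 0" "x \<in> ball d q" "ball d q \<subseteq> ball x e"
proof -
  obtain q where q: "q \<in> \<rat>" "0 < q" "q < e / 2" using Rats_dense_in_real[of 0 "e/2"] e by auto
  obtain d where d: "d \<in> C" "dist d x < q" using C q(2) by blast
  have "x \<in> ball d q" using d by simp
  moreover have "ball d q \<subseteq> ball x e"
  proof
    fix y assume "y \<in> ball d q"
    have "dist x y \<le> dist d x + dist d y" by (metis dist_commute dist_triangle2)
    also have "\<dots> < e" using \<open>y \<in> ball d q\<close> d q by simp
    finally show "y \<in> ball x e" by simp
  qed
  ultimately show ?thesis using that d q by blast
qed

lemma open_in_pair_borel:
  fixes W :: "('a::metric_space \<times> 'b::metric_space) set"
  assumes sa: "separable_space (euclidean :: 'a topology)" and sb: "separable_space (euclidean :: 'b topology)"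
    and W: "open W"
  shows "W \<in> sets (borel \<Otimes>\<^sub>M borel)"
proof -
  obtain Ca :: "'a set" where Ca: "countable Ca" "\<And>x e. e > 0 \<Longrightarrow> \<exists>d\<in>Ca. dist d x < e"
    using separable_dense[OF sa] by blast
  obtain Cb :: "'b set" where Cb: "countable Cb" "\<And>x e. e > 0 \<Longrightarrow> \<exists>d\<in>Cb. dist d x < e"
    using separable_dense[OF sb] by blast
  define R where "R = {(d::'a,q::real,d'::'b,q'::real). d \<in> Ca \<and> q \<in> \<rat> \<and> d' \<in> Cb \<and> q' \<in> \<rat> \<and> ball d q \<times> ball d' q' \<subseteq> W}"
  define B where "B = (\<lambda>(d::'a,q::real,d'::'b,q'::real). ball d q \<times> ball d' q')"
  have "R \<subseteq> Ca \<times> \<rat> \<times> Cb \<times> \<rat>" unfolding R_def by auto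
  moreover have "countable (Ca \<times> \<rat> \<times> Cb \<times> (\<rat> :: real set))"
    by (intro countable_SIGMA Ca(1) Cb(1) countable_rat)
  ultimately have cR: "countable R" by (rule countable_subset)
  have "W = \<Union>(B ` R)"
  proof
    show "\<Union>(B ` R) \<subseteq> W" unfolding R_def B_def by auto
    show "W \<subseteq> \<Union>(B ` R)"
    proof
      fix p assume "p \<in> W"
      then obtain A A' where AA: "open A" "open A'" "p \<in> A \<times> A'" "A \<times> A' \<subseteq> W"
        using open_prod_elim[OF W] by metis
      obtain x y where p: "p = (x,y)" by (cases p)
      obtain e where e: "e > 0" "ball x e \<subseteq> A" using AA p open_contains_ball by blast
      obtain e' where e': "e' > 0" "ball y e' \<subseteq> A'" using AA p open_contains_ball by blast
      obtain d q where dq: "d \<in> Ca" "q \<in> \<rat>" "q > 0" "x \<in> ball d q" "ball d q \<subseteq> ball x e"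
        using small_rat_ball[OF Ca(2) e(1)] by blast
      obtain d' q' where dq': "d' \<in> Cb" "q' \<in> \<rat>" "q' > 0" "y \<in> ball d' q'" "ball d' q' \<subseteq> ball y e'"
        using small_rat_ball[OF Cb(2) e'(1)] by blast
      have "ball d q \<times> ball d' q' \<subseteq> W" using AA(4) dq(5) dq'(5) e(2) e'(2) by blast
      then have "(d,q,d',q') \<in> R" unfolding R_def using dq dq' by auto
      moreover have "p \<in> B (d,q,d',q')" unfolding B_def using p dq dq' by auto
      ultimately show "p \<in> \<Union>(B ` R)" by blast
    qed
  qed
  also have "\<dots> \<in> sets (borel \<Otimes>\<^sub>M borel)"
    using cR by (rule sets.countable_UN'') (auto simp: B_def)
  finally show ?thesis .
qed

lemma continuous_pair_measurable:
  fixes f :: "('a::metric_space \<times> 'b::metric_space) \<Rightarrow> 'c::topological_space"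
  assumes sa: "separable_space (euclidean :: 'a topology)" and sb: "separable_space (euclidean :: 'b topology)"
    and f: "continuous_on UNIV f"
  shows "f \<in> borel \<Otimes>\<^sub>M borel \<rightarrow>\<^sub>M borel"
proof (rule borel_measurableI)
  fix S :: "'c set" assume "open S"
  then have "open (f -` S)" using f by (simp add: continuous_on_open_vimage)
  then show "f -` S \<inter> space (borel \<Otimes>\<^sub>M borel) \<in> sets (borel \<Otimes>\<^sub>M borel)"
    using open_in_pair_borel[OF sa sb] by (simp add: space_pair_measure)
qed



lemma prob_full_Int:
  assumes P: "prob_space \<nu>" and H: "H \<in> sets \<nu>" "emeasure \<nu> H = 1" and B: "B \<in> sets \<nu>"
  shows "emeasure \<nu> (H \<inter> B) = emeasure \<nu> B"
proof -
  interpret prob_space \<nu> by fact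
  have "AE x in \<nu>. x \<in> H" using H by (simp add: AE_in_set_eq_1 emeasure_eq_measure)
  then show ?thesis
    by (intro emeasure_eq_AE) (auto intro: H B)
qed

lemma haar_unique:
  fixes N :: "'a::ab_group_add measure"
  assumes add: "(\<lambda>(h,k). h + k) \<in> N \<Otimes>\<^sub>M N \<rightarrow>\<^sub>M N"
    and s1: "sets \<nu>1 = sets N" and s2: "sets \<nu>2 = sets N"
    and P1: "prob_space \<nu>1" and P2: "prob_space \<nu>2"
    and H: "H \<in> sets N" and H1: "emeasure \<nu>1 H = 1" and H2: "emeasure \<nu>2 H = 1"
    and inv1: "\<And>g. g \<in> H \<Longrightarrow> distr \<nu>1 N ((+) g) = \<nu>1"
    and inv2: "\<And>g. g \<in> H \<Longrightarrow> distr \<nu>2 N ((+) g) = \<nu>2"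
  shows "\<nu>1 = \<nu>2"
proof (rule measure_eqI)
  show "sets \<nu>1 = sets \<nu>2" using s1 s2 by simp
  fix A assume "A \<in> sets \<nu>1"
  then have A: "A \<in> sets N" using s1 by simp
  interpret p1: prob_space \<nu>1 by fact
  interpret p2: prob_space \<nu>2 by fact
  interpret P: pair_sigma_finite \<nu>1 \<nu>2
    using P1 P2 by (simp add: pair_sigma_finite_def prob_space_imp_sigma_finite)
  have sp1: "space \<nu>1 = space N" and sp2: "space \<nu>2 = space N" using sets_eq_imp_space_eq[OF s1] sets_eq_imp_space_eq[OF s2] by auto
  have HS: "H \<subseteq> space N" using H sets.sets_into_space by auto
  have tr: "(\<lambda>k. g + k) \<in> N \<rightarrow>\<^sub>M N" if "g \<in> space N" for g
    using measurable_compose[OF measurable_Pair[OF measurable_const[OF that] measurable_ident] add] by simp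
  have tr': "(\<lambda>k. k + g) \<in> N \<rightarrow>\<^sub>M N" if "g \<in> space N" for g
    using tr[OF that] by (simp add: add.commute)
  define S where "S = (H \<times> space N) \<inter> ((\<lambda>(h,k). h + k) -` A \<inter> space (N \<Otimes>\<^sub>M N))"
  have sN: "sets (\<nu>1 \<Otimes>\<^sub>M \<nu>2) = sets (N \<Otimes>\<^sub>M N)"
    using s1 s2 by (intro sets_pair_measure_cong) auto
  have SN: "S \<in> sets (N \<Otimes>\<^sub>M N)"
    unfolding S_def by (rule sets.Int[OF pair_measureI[OF H sets.top] measurable_sets[OF add A]])
  then have S: "S \<in> sets (\<nu>1 \<Otimes>\<^sub>M \<nu>2)" using sN by simp
  have "emeasure (\<nu>1 \<Otimes>\<^sub>M \<nu>2) S = (\<integral>\<^sup>+h. emeasure \<nu>2 (Pair h -` S) \<partial>\<nu>1)"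
    by (rule p2.emeasure_pair_measure_alt[OF S])
  also have "\<dots> = (\<integral>\<^sup>+h. indicator H h * emeasure \<nu>2 A \<partial>\<nu>1)"
  proof (intro nn_integral_cong)
    fix h assume "h \<in> space \<nu>1"
    then have h: "h \<in> space N" using sp1 by simp
    show "emeasure \<nu>2 (Pair h -` S) = indicator H h * emeasure \<nu>2 A"
    proof (cases "h \<in> H")
      case True
      have "Pair h -` S = (\<lambda>k. h + k) -` A \<inter> space N"
        using True h unfolding S_def by (auto simp: space_pair_measure)
      then have "emeasure \<nu>2 (Pair h -` S) = emeasure (distr \<nu>2 N ((+) h)) A"
        using A tr[OF h] by (simp add: emeasure_distr measurable_cong_sets[OF s2 refl] sp2)
      also have "\<dots> = emeasure \<nu>2 A" using inv2[OF True] by simp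
      finally show ?thesis using True by simp
    next
      case False
      then have "Pair h -` S = {}" unfolding S_def by auto
      then show ?thesis using False by simp
    qed
  qed
  also have "\<dots> = emeasure \<nu>2 A * emeasure \<nu>1 H"
    using H s1 by (simp add: nn_integral_multc mult.commute)
  also have "\<dots> = emeasure \<nu>2 A" using H1 by simp
  finally have e2: "emeasure (\<nu>1 \<Otimes>\<^sub>M \<nu>2) S = emeasure \<nu>2 A" .
  have "emeasure (\<nu>1 \<Otimes>\<^sub>M \<nu>2) S = (\<integral>\<^sup>+k. emeasure \<nu>1 ((\<lambda>h. (h, k)) -` S) \<partial>\<nu>2)"
    by (rule P.emeasure_pair_measure_alt2[OF S])
  also have "\<dots> = (\<integral>\<^sup>+k. emeasure \<nu>1 A \<partial>\<nu>2)"
  proof (rule nn_integral_cong_AE)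
    have "AE k in \<nu>2. k \<in> H" using H H2 s2 by (simp add: p2.AE_in_set_eq_1 p2.emeasure_eq_measure)
    then show "AE k in \<nu>2. emeasure \<nu>1 ((\<lambda>h. (h, k)) -` S) = emeasure \<nu>1 A"
    proof (rule AE_mp, intro AE_I2 impI)
      fix k assume k: "k \<in> space \<nu>2" "k \<in> H"
      then have ks: "k \<in> space N" using sp2 by simp
      have "(\<lambda>h. (h, k)) -` S = H \<inter> ((\<lambda>h. k + h) -` A \<inter> space N)"
        using HS ks unfolding S_def by (auto simp: space_pair_measure add.commute)
      then have "emeasure \<nu>1 ((\<lambda>h. (h, k)) -` S) = emeasure \<nu>1 ((\<lambda>h. k + h) -` A \<inter> space N)"
        using prob_full_Int[OF P1, of H] H H1 s1 measurable_sets[OF tr[OF ks] A] by simp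
      also have "\<dots> = emeasure (distr \<nu>1 N ((+) k)) A"
        using A tr[OF ks] by (simp add: emeasure_distr measurable_cong_sets[OF s1 refl] sp1)
      also have "\<dots> = emeasure \<nu>1 A" using inv1[OF k(2)] by simp
      finally show "emeasure \<nu>1 ((\<lambda>h. (h, k)) -` S) = emeasure \<nu>1 A" .
    qed
  qed
  also have "\<dots> = emeasure \<nu>1 A" using p2.emeasure_space_1 by simp
  finally show "emeasure \<nu>1 A = emeasure \<nu>2 A" using e2 by simp
qed



lemma sb_sep:
  fixes av :: "'k::{field,metric_space} \<Rightarrow> real" and sc :: "'k \<Rightarrow> 'e::{ab_group_add,metric_space} \<Rightarrow> 'e"
  assumes sb: "separable_banach av sc nrm"
  shows "separable_space (euclidean :: 'e topology)"
  using sb unfolding separable_banach_def by auto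

lemma sb_nrm_minus:
  fixes av :: "'k::{field,metric_space} \<Rightarrow> real" and sc :: "'k \<Rightarrow> 'e::{ab_group_add,metric_space} \<Rightarrow> 'e"
  assumes na: "nonarch_absval av" and sb: "separable_banach av sc nrm"
  shows "nrm (- x) = nrm x"
proof -
  note e = sb_facts[OF sb]
  interpret V: module sc using e(1) by (simp add: module_iff_vector_space)
  show ?thesis using e(4)[of "-1" x] na_simps(3)[OF na] by simp
qed

lemma cont_lin2:
  fixes av :: "'k::{field,metric_space} \<Rightarrow> real" and sc :: "'k \<Rightarrow> 'e::{ab_group_add,metric_space} \<Rightarrow> 'e"
  assumes na: "nonarch_absval av" and sb: "separable_banach av sc nrm"
  shows "continuous_on UNIV (\<lambda>p. sc a (fst p) + sc b (snd p))"
proof -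
  note e = sb_facts[OF sb]
  interpret V: module sc using e(1) by (simp add: module_iff_vector_space)
  define L where "L = av a + av b + 1"
  have L: "L > 0" unfolding L_def using na_facts(1)[OF na, of a] na_facts(1)[OF na, of b] by simp
  have key: "dist (sc a (fst p) + sc b (snd p)) (sc a (fst q) + sc b (snd q)) \<le> L * dist p q" for p q
  proof -
    have "dist (sc a (fst p) + sc b (snd p)) (sc a (fst q) + sc b (snd q))
        = nrm (sc a (fst p - fst q) + sc b (snd p - snd q))"
      by (simp add: e(6) V.scale_right_diff_distrib algebra_simps)
    also have "\<dots> \<le> max (av a * dist (fst p) (fst q)) (av b * dist (snd p) (snd q))"
      using e(5)[of "sc a (fst p - fst q)" "sc b (snd p - snd q)"] by (simp add: e(4) e(6))
    also have "\<dots> \<le> L * dist p q"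
    proof -
      have "av a * dist (fst p) (fst q) \<le> av a * dist p q"
        using dist_fst_le[of p q] na_facts(1)[OF na, of a] by (rule mult_left_mono)
      moreover have "av b * dist (snd p) (snd q) \<le> av b * dist p q"
        using dist_snd_le[of p q] na_facts(1)[OF na, of b] by (rule mult_left_mono)
      moreover have "av a * dist p q \<le> L * dist p q" "av b * dist p q \<le> L * dist p q"
        unfolding L_def using na_facts(1)[OF na, of a] na_facts(1)[OF na, of b]
        by (simp_all add: mult_right_mono)
      ultimately show ?thesis by simp
    qed
    finally show ?thesis .
  qed
  show ?thesis unfolding continuous_on_iff
  proof (intro ballI allI impI)
    fix p and \<epsilon> :: real assume "\<epsilon> > 0"
    show "\<exists>d>0. \<forall>q\<in>UNIV. dist q p < d \<longrightarrow> dist (sc a (fst q) + sc b (snd q)) (sc a (fst p) + sc b (snd p)) < \<epsilon>"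
    proof (intro exI[of _ "\<epsilon> / L"] conjI ballI impI)
      show "\<epsilon> / L > 0" using \<open>\<epsilon> > 0\<close> L by simp
      fix q assume "dist q p < \<epsilon> / L"
      then have "L * dist q p < \<epsilon>" using L by (simp add: pos_less_divide_eq mult.commute)
      then show "dist (sc a (fst q) + sc b (snd q)) (sc a (fst p) + sc b (snd p)) < \<epsilon>"
        using key[of q p] by simp
    qed
  qed
qed

lemma cont_translate:
  fixes av :: "'k::{field,metric_space} \<Rightarrow> real" and sc :: "'k \<Rightarrow> 'e::{ab_group_add,metric_space} \<Rightarrow> 'e"
    and g :: 'e
  assumes sb: "separable_banach av sc nrm"
  shows "continuous_on UNIV (\<lambda>x. g + x)"
proof -
  note e = sb_facts[OF sb]
  have "dist (g + x) (g + y) = dist x y" for x y by (simp add: e(6))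
  then show ?thesis unfolding continuous_on_iff by (metis)
qed

lemma cont_scale:
  fixes av :: "'k::{field,metric_space} \<Rightarrow> real" and sc :: "'k \<Rightarrow> 'e::{ab_group_add,metric_space} \<Rightarrow> 'e"
  assumes na: "nonarch_absval av" and sb: "separable_banach av sc nrm"
  shows "continuous_on UNIV (sc a)"
proof -
  note e = sb_facts[OF sb]
  interpret V: module sc using e(1) by (simp add: module_iff_vector_space)
  have "continuous_on UNIV ((\<lambda>p. sc a (fst p) + sc 0 (snd p)) \<circ> (\<lambda>x. (x, x)))"
    by (intro continuous_on_compose continuous_on_subset[OF cont_lin2[OF na sb]] continuous_intros) auto
  then show ?thesis by (simp add: o_def)
qed

lemma haar_translate:
  fixes av :: "'k::{field,metric_space} \<Rightarrow> real" and sc :: "'k \<Rightarrow> 'e::{ab_group_add,metric_space} \<Rightarrow> 'e"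
  assumes na: "nonarch_absval av" and sb: "separable_banach av sc nrm" and G: "compact G"
    and GD: "D_submodule av sc G" and mu: "normalised_haar G \<mu>" and g: "g \<in> G"
  shows "distr \<mu> borel ((+) g) = \<mu>"
proof -
  note e = sb_facts[OF sb]
  interpret V: module sc using e(1) by (simp add: module_iff_vector_space)
  have smu: "sets \<mu> = sets borel" and muG: "emeasure \<mu> G = 1" and muU: "emeasure \<mu> UNIV = 1"
    and inv: "\<And>g A. g \<in> G \<Longrightarrow> A \<in> sets borel \<Longrightarrow> A \<subseteq> G \<Longrightarrow> emeasure \<mu> ((\<lambda>x. g + x) ` A) = emeasure \<mu> A"
    using mu unfolding normalised_haar_def by auto
  have spmu: "space \<mu> = UNIV" using sets_eq_imp_space_eq[OF smu] by simp
  have P: "prob_space \<mu>" by (rule prob_spaceI) (simp add: spmu muU)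
  have Gb: "G \<in> sets borel" using compact_imp_closed[OF G] by (simp add: borel_closed)
  have mg: "(\<lambda>x. g + x) \<in> borel \<rightarrow>\<^sub>M borel" for g :: 'e
    by (rule borel_measurable_continuous_onI[OF cont_translate[OF sb]])
  have Gneg: "- g \<in> G" if "g \<in> G" for g
  proof -
    have "\<forall>a x. av a \<le> 1 \<longrightarrow> x \<in> G \<longrightarrow> sc a x \<in> G" using GD unfolding D_submodule_def by blast
    from this[rule_format, of "-1" g] show ?thesis using that na_simps(3)[OF na] by simp
  qed
  have Gadd: "u + v \<in> G" if "u \<in> G" "v \<in> G" for u v using GD that unfolding D_submodule_def by auto
  show ?thesis
  proof (rule measure_eqI)
    show "sets (distr \<mu> borel ((+) g)) = sets \<mu>" using smu by simp
    fix A assume "A \<in> sets (distr \<mu> borel ((+) g))"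
    then have A: "A \<in> sets borel" by simp
    have pre: "(+) g -` A \<in> sets borel" using measurable_sets[OF mg A] by simp
    have "emeasure (distr \<mu> borel ((+) g)) A = emeasure \<mu> ((+) g -` A)"
      using A mg[of g] smu spmu by (simp add: emeasure_distr measurable_cong_sets[OF smu refl])
    also have "\<dots> = emeasure \<mu> (G \<inter> (+) g -` A)"
      using prob_full_Int[OF P, of G "(+) g -` A"] Gb pre muG smu by simp
    also have "G \<inter> (+) g -` A = (\<lambda>x. - g + x) ` (A \<inter> G)"
    proof
      show "G \<inter> (+) g -` A \<subseteq> (\<lambda>x. - g + x) ` (A \<inter> G)"
      proof
        fix x assume x: "x \<in> G \<inter> (+) g -` A"
        then have "g + x \<in> A \<inter> G" using Gadd g by auto
        moreover have "x = - g + (g + x)" by simp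
        ultimately show "x \<in> (\<lambda>x. - g + x) ` (A \<inter> G)" by blast
      qed
      show "(\<lambda>x. - g + x) ` (A \<inter> G) \<subseteq> G \<inter> (+) g -` A"
      proof
        fix y assume "y \<in> (\<lambda>x. - g + x) ` (A \<inter> G)"
        then obtain x where x: "x \<in> A" "x \<in> G" "y = - g + x" by blast
        then have "y \<in> G" using Gadd Gneg[OF g] by blast
        moreover have "g + y \<in> A" using x by simp
        ultimately show "y \<in> G \<inter> (+) g -` A" by simp
      qed
    qed
    also have "emeasure \<mu> ((\<lambda>x. - g + x) ` (A \<inter> G)) = emeasure \<mu> (A \<inter> G)"
      using inv[OF Gneg[OF g]] A Gb by auto
    also have "\<dots> = emeasure \<mu> A"
      using prob_full_Int[OF P, of G A] Gb A muG smu by (simp add: Int_commute)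
    finally show "emeasure (distr \<mu> borel ((+) g)) A = emeasure \<mu> A" .
  qed
qed



lemma orth_facts:
  fixes av :: "'k::{field,metric_space} \<Rightarrow> real"
  assumes na: "nonarch_absval av" and o: "orthonormal2 av (a11, a12) (a21, a22)"
  shows "av a11 \<le> 1" "av a12 \<le> 1" "av a21 \<le> 1" "av a22 \<le> 1"
    "av (a11 * a22 - a12 * a21) \<ge> 1"
proof -
  have n1: "max (av a11) (av a12) = 1" and n2: "max (av a21) (av a22) = 1"
    and ob: "\<And>b1 b2. max (av (b1 * a11 + b2 * a21)) (av (b1 * a12 + b2 * a22)) = max (av b1) (av b2)"
    using o unfolding orthonormal2_def norm2_def by auto
  show "av a11 \<le> 1" "av a12 \<le> 1" "av a21 \<le> 1" "av a22 \<le> 1" using n1 n2 by auto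
  define d where "d = a11 * a22 - a12 * a21"
  have "max (av (a22 * a11 + (- a12) * a21)) (av (a22 * a12 + (- a12) * a22)) = max (av a22) (av (- a12))"
    by (rule ob)
  then have d1: "av d = max (av a22) (av a12)"
    unfolding d_def using na_simps[OF na] na_facts(1)[OF na, of "a11 * a22 - a12 * a21"]
    by (simp add: algebra_simps max_absorb1)
  have "max (av ((- a21) * a11 + a11 * a21)) (av ((- a21) * a12 + a11 * a22)) = max (av (- a21)) (av a11)"
    by (rule ob)
  then have d2: "av d = max (av a21) (av a11)"
    unfolding d_def using na_simps[OF na] na_facts(1)[OF na, of "a11 * a22 - a12 * a21"]
    by (simp add: algebra_simps max_absorb2)
  show "av (a11 * a22 - a12 * a21) \<ge> 1" using d1 d2 n1 unfolding d_def[symmetric] by linarith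
qed

lemma gaussian_part:
  fixes av :: "'k::{field,metric_space} \<Rightarrow> real" and sc :: "'k \<Rightarrow> 'e::{ab_group_add,metric_space} \<Rightarrow> 'e"
  assumes lf: "local_field av" and sb: "separable_banach av sc nrm" and G: "compact G"
    and GD: "D_submodule av sc G" and mu: "normalised_haar G \<mu>"
    and o: "orthonormal2 av (a11, a12) (a21, a22)"
  shows "distr (\<mu> \<Otimes>\<^sub>M \<mu>) (borel \<Otimes>\<^sub>M borel) (\<lambda>(x, y). (sc a11 x + sc a12 y, sc a21 x + sc a22 y)) = \<mu> \<Otimes>\<^sub>M \<mu>"
proof -
  note na = lf_na[OF lf]
  note e = sb_facts[OF sb] and s = na_simps[OF na]
  interpret V: module sc using e(1) by (simp add: module_iff_vector_space)
  have sep: "separable_space (euclidean :: 'e topology)" by (rule sb_sep[OF sb])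
  have smu: "sets \<mu> = sets borel" and muG: "emeasure \<mu> G = 1" and muU: "emeasure \<mu> UNIV = 1"
    using mu unfolding normalised_haar_def by auto
  have spmu: "space \<mu> = UNIV" using sets_eq_imp_space_eq[OF smu] by simp
  have P: "prob_space \<mu>" by (rule prob_spaceI) (simp add: spmu muU)
  interpret PP: pair_prob_space \<mu> \<mu>
    using P by (simp add: pair_prob_space_def pair_sigma_finite_def prob_space_imp_sigma_finite)
  have Gb: "G \<in> sets borel" using compact_imp_closed[OF G] by (simp add: borel_closed)
  have G0: "0 \<in> G" and Gadd: "\<And>u v. u \<in> G \<Longrightarrow> v \<in> G \<Longrightarrow> u + v \<in> G"
    and Gsc: "\<And>a u. av a \<le> 1 \<Longrightarrow> u \<in> G \<Longrightarrow> sc a u \<in> G"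
    using GD unfolding D_submodule_def by auto
  have inv: "\<And>g. g \<in> G \<Longrightarrow> distr \<mu> borel ((+) g) = \<mu>"
    using haar_translate[OF na sb G GD mu] by blast
  let ?N = "borel \<Otimes>\<^sub>M borel :: ('e \<times> 'e) measure"
  define \<phi> where "\<phi> = (\<lambda>(x, y). (sc a11 x + sc a12 y, sc a21 x + sc a22 y))"
  have lin2m: "(\<lambda>p. sc a (fst p) + sc b (snd p)) \<in> ?N \<rightarrow>\<^sub>M borel" for a b
    by (rule continuous_pair_measurable[OF sep sep cont_lin2[OF na sb]])
  have addE: "(\<lambda>p. fst p + snd p) \<in> ?N \<rightarrow>\<^sub>M (borel :: 'e measure)"
    using lin2m[of 1 1] by simp
  have trE: "(\<lambda>x. g + x) \<in> borel \<rightarrow>\<^sub>M (borel :: 'e measure)" for g :: 'e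
    by (rule borel_measurable_continuous_onI[OF cont_translate[OF sb]])
  have \<phi>m: "\<phi> \<in> ?N \<rightarrow>\<^sub>M ?N"
  proof -
    have "(\<lambda>p. (sc a11 (fst p) + sc a12 (snd p), sc a21 (fst p) + sc a22 (snd p))) \<in> ?N \<rightarrow>\<^sub>M ?N"
      by (intro measurable_Pair lin2m)
    moreover have "\<phi> = (\<lambda>p. (sc a11 (fst p) + sc a12 (snd p), sc a21 (fst p) + sc a22 (snd p)))"
      unfolding \<phi>_def by auto
    ultimately show ?thesis by simp
  qed
  have addN: "(\<lambda>(h, k). h + k) \<in> ?N \<Otimes>\<^sub>M ?N \<rightarrow>\<^sub>M ?N"
  proof -
    have c1: "(\<lambda>z. (fst (fst z), fst (snd z))) \<in> ?N \<Otimes>\<^sub>M ?N \<rightarrow>\<^sub>M ?N"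
      by (intro measurable_Pair measurable_compose[OF measurable_fst measurable_fst]
          measurable_compose[OF measurable_snd measurable_fst])
    have c2: "(\<lambda>z. (snd (fst z), snd (snd z))) \<in> ?N \<Otimes>\<^sub>M ?N \<rightarrow>\<^sub>M ?N"
      by (intro measurable_Pair measurable_compose[OF measurable_fst measurable_snd]
          measurable_compose[OF measurable_snd measurable_snd])
    have "(\<lambda>z. (fst (fst z) + fst (snd z), snd (fst z) + snd (snd z))) \<in> ?N \<Otimes>\<^sub>M ?N \<rightarrow>\<^sub>M ?N"
      using measurable_compose[OF c1 addE] measurable_compose[OF c2 addE]
      by (intro measurable_Pair) auto
    moreover have "(\<lambda>(h, k). h + k) = (\<lambda>z::('e \<times> 'e) \<times> ('e \<times> 'e). (fst (fst z) + fst (snd z), snd (fst z) + snd (snd z)))"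
      by (auto simp: fun_eq_iff plus_prod_def)
    ultimately show ?thesis by simp
  qed
  have trN: "(\<lambda>z. g + z) \<in> ?N \<rightarrow>\<^sub>M ?N" for g :: "'e \<times> 'e"
  proof -
    have "(\<lambda>z. (fst g + fst z, snd g + snd z)) \<in> ?N \<rightarrow>\<^sub>M ?N"
      by (intro measurable_Pair measurable_compose[OF measurable_fst trE] measurable_compose[OF measurable_snd trE])
    moreover have "(\<lambda>z. g + z) = (\<lambda>z. (fst g + fst z, snd g + snd z))"
      by (auto simp: fun_eq_iff plus_prod_def)
    ultimately show ?thesis by simp
  qed
  have sN: "sets (\<mu> \<Otimes>\<^sub>M \<mu>) = sets ?N" by (intro sets_pair_measure_cong smu)
  have \<phi>m': "\<phi> \<in> \<mu> \<Otimes>\<^sub>M \<mu> \<rightarrow>\<^sub>M ?N" using \<phi>m measurable_cong_sets[OF sN refl] by blast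
  have trN': "(\<lambda>z. g + z) \<in> \<mu> \<Otimes>\<^sub>M \<mu> \<rightarrow>\<^sub>M ?N" for g using trN measurable_cong_sets[OF sN refl] by blast
  have GG: "G \<times> G \<in> sets ?N" using Gb by (intro pair_measureI) auto
  have inv2: "distr (\<mu> \<Otimes>\<^sub>M \<mu>) ?N ((+) g) = \<mu> \<Otimes>\<^sub>M \<mu>" if gG: "g \<in> G \<times> G" for g
  proof -
    obtain g1 g2 where g: "g = (g1, g2)" "g1 \<in> G" "g2 \<in> G" using gG by (metis mem_Times_iff prod.collapse)
    have m1: "(+) g1 \<in> \<mu> \<rightarrow>\<^sub>M borel" "(+) g2 \<in> \<mu> \<rightarrow>\<^sub>M borel"
      using trE measurable_cong_sets[OF smu refl] by blast+
    have "distr \<mu> borel ((+) g1) \<Otimes>\<^sub>M distr \<mu> borel ((+) g2)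
        = distr (\<mu> \<Otimes>\<^sub>M \<mu>) ?N (\<lambda>(x, y). (g1 + x, g2 + y))"
      using inv[OF g(3)] P prob_space_imp_sigma_finite by (intro pair_measure_distr m1) auto
    moreover have "(\<lambda>(x, y). (g1 + x, g2 + y)) = (+) g" using g by (auto simp: fun_eq_iff)
    ultimately show ?thesis using inv[OF g(2)] inv[OF g(3)] by simp
  qed
  note of = orth_facts[OF na o]
  define d where "d = a11 * a22 - a12 * a21"
  have d1: "av d \<ge> 1" using of(5) unfolding d_def .
  have d0: "d \<noteq> 0" using d1 s(1) by auto
  have avd: "av (c / d) \<le> 1" if "av c \<le> 1" for c
    using that d1 by (simp add: s(7) divide_le_eq_1)
  have \<phi>G: "\<phi> z \<in> G \<times> G" if "z \<in> G \<times> G" for z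
    using that of Gadd Gsc unfolding \<phi>_def by (auto split: prod.splits)
  have \<phi>add: "\<phi> (h + z) = \<phi> h + \<phi> z" for h z
    unfolding \<phi>_def by (auto simp: plus_prod_def V.scale_right_distrib split: prod.splits)
  have \<phi>surj: "\<exists>h\<in>G \<times> G. \<phi> h = g" if gG: "g \<in> G \<times> G" for g
  proof -
    obtain g1 g2 where g: "g = (g1, g2)" "g1 \<in> G" "g2 \<in> G" using gG by (metis mem_Times_iff prod.collapse)
    define h1 where "h1 = sc (a22 / d) g1 + sc (- a12 / d) g2"
    define h2 where "h2 = sc (- a21 / d) g1 + sc (a11 / d) g2"
    have m12: "av (- a12) \<le> 1" "av (- a21) \<le> 1" using of s(4) by auto
    have "h1 \<in> G" unfolding h1_def
      by (rule Gadd[OF Gsc[OF avd[OF of(4)] g(2)] Gsc[OF avd[OF m12(1)] g(3)]])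
    moreover have "h2 \<in> G" unfolding h2_def
      by (rule Gadd[OF Gsc[OF avd[OF m12(2)] g(2)] Gsc[OF avd[OF of(1)] g(3)]])
    moreover have "sc a11 h1 + sc a12 h2 = g1"
    proof -
      have "sc a11 h1 + sc a12 h2 = sc ((a11 * a22 - a12 * a21) / d) g1 + sc ((a12 * a11 - a11 * a12) / d) g2"
        unfolding h1_def h2_def by (simp add: V.scale_right_distrib V.scale_left_distrib diff_divide_distrib
            V.scale_left_diff_distrib algebra_simps)
      then show ?thesis using d0 unfolding d_def by simp
    qed
    moreover have "sc a21 h1 + sc a22 h2 = g2"
    proof -
      have "sc a21 h1 + sc a22 h2 = sc ((a21 * a22 - a22 * a21) / d) g1 + sc ((a11 * a22 - a12 * a21) / d) g2"
        unfolding h1_def h2_def by (simp add: V.scale_right_distrib V.scale_left_distrib diff_divide_distrib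
            V.scale_left_diff_distrib algebra_simps)
      then show ?thesis using d0 unfolding d_def by simp
    qed
    ultimately show ?thesis using g unfolding \<phi>_def by (intro bexI[of _ "(h1, h2)"]) auto
  qed
  define \<nu> where "\<nu> = distr (\<mu> \<Otimes>\<^sub>M \<mu>) ?N \<phi>"
  have P\<nu>: "prob_space \<nu>" unfolding \<nu>_def by (rule PP.prob_space_distr[OF \<phi>m'])
  have s\<nu>: "sets \<nu> = sets ?N" unfolding \<nu>_def by simp
  have P2: "prob_space (\<mu> \<Otimes>\<^sub>M \<mu>)" by (rule prob_space_pair[OF P P])
  have GG2: "emeasure (\<mu> \<Otimes>\<^sub>M \<mu>) (G \<times> G) = 1"
    using sigma_finite_measure.emeasure_pair_measure_Times[OF prob_space_imp_sigma_finite[OF P], of G \<mu> G] Gb smu muG by simp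
  have GG1: "emeasure \<nu> (G \<times> G) = 1"
  proof -
    have "emeasure \<nu> (G \<times> G) = emeasure (\<mu> \<Otimes>\<^sub>M \<mu>) (\<phi> -` (G \<times> G) \<inter> space (\<mu> \<Otimes>\<^sub>M \<mu>))"
      unfolding \<nu>_def using GG \<phi>m' by (simp add: emeasure_distr)
    moreover have "G \<times> G \<subseteq> \<phi> -` (G \<times> G) \<inter> space (\<mu> \<Otimes>\<^sub>M \<mu>)"
      using \<phi>G by (auto simp: space_pair_measure spmu)
    moreover have "\<phi> -` (G \<times> G) \<inter> space (\<mu> \<Otimes>\<^sub>M \<mu>) \<in> sets (\<mu> \<Otimes>\<^sub>M \<mu>)"
      using measurable_sets[OF \<phi>m' GG] .
    ultimately have "emeasure \<nu> (G \<times> G) \<ge> 1"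
      using emeasure_mono[of "G \<times> G" _ "\<mu> \<Otimes>\<^sub>M \<mu>"] GG2 by auto
    moreover have "emeasure \<nu> (G \<times> G) \<le> 1" using prob_space.emeasure_le_1[OF P\<nu>] by blast
    ultimately show ?thesis by simp
  qed
  have inv1: "distr \<nu> ?N ((+) g) = \<nu>" if gG: "g \<in> G \<times> G" for g
  proof -
    obtain h where h: "h \<in> G \<times> G" "\<phi> h = g" using \<phi>surj[OF gG] by blast
    have "distr \<nu> ?N ((+) g) = distr (\<mu> \<Otimes>\<^sub>M \<mu>) ?N ((+) g \<circ> \<phi>)"
      unfolding \<nu>_def by (rule distr_distr[OF trN \<phi>m'])
    also have "(+) g \<circ> \<phi> = \<phi> \<circ> (+) h" using h \<phi>add by (auto simp: fun_eq_iff)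
    also have "distr (\<mu> \<Otimes>\<^sub>M \<mu>) ?N (\<phi> \<circ> (+) h) = distr (distr (\<mu> \<Otimes>\<^sub>M \<mu>) ?N ((+) h)) ?N \<phi>"
      by (rule distr_distr[OF \<phi>m trN', symmetric])
    also have "\<dots> = \<nu>" unfolding \<nu>_def using inv2[OF h(1)] by simp
    finally show ?thesis .
  qed
  have "\<nu> = \<mu> \<Otimes>\<^sub>M \<mu>"
    by (rule haar_unique[OF addN s\<nu> sN P\<nu> P2 GG GG1 GG2 inv1 inv2])
  then show ?thesis unfolding \<nu>_def \<phi>_def .
qed



lemma char_sub:
  fixes av :: "'k::{field,metric_space} \<Rightarrow> real" and sc :: "'k \<Rightarrow> 'e::{ab_group_add,metric_space} \<Rightarrow> 'e"
    and M :: "'w measure" and X :: "'w \<Rightarrow> 'e"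
  assumes lf: "local_field av" and sb: "separable_banach av sc nrm" and G: "compact G"
    and GD: "D_submodule av sc G" and P: "prob_space M" and Xm: "X \<in> borel_measurable M"
    and mu: "normalised_haar G (distr M borel X)"
    and x: "x \<in> G" and T: "dual_elem sc T"
  shows "ereal (av (T x)) \<le> esssup M (\<lambda>\<omega>. ereal (av (T (X \<omega>))))"
proof -
  note na = lf_na[OF lf]
  note e = sb_facts[OF sb] and s = na_simps[OF na] and f = na_facts[OF na]
  interpret V: module sc using e(1) by (simp add: module_iff_vector_space)
  interpret prob_space M by fact
  define \<mu> where "\<mu> = distr M borel X"
  have smu: "sets \<mu> = sets borel" and muG: "emeasure \<mu> G = 1" and muU: "emeasure \<mu> UNIV = 1"
    and inv: "\<And>g A. g \<in> G \<Longrightarrow> A \<in> sets borel \<Longrightarrow> A \<subseteq> G \<Longrightarrow> emeasure \<mu> ((\<lambda>x. g + x) ` A) = emeasure \<mu> A"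
    using mu unfolding normalised_haar_def \<mu>_def by auto
  have G0: "0 \<in> G" and Gadd: "\<And>u v. u \<in> G \<Longrightarrow> v \<in> G \<Longrightarrow> u + v \<in> G"
    and Gsc: "\<And>a u. av a \<le> 1 \<Longrightarrow> u \<in> G \<Longrightarrow> sc a u \<in> G"
    using GD unfolding D_submodule_def by auto
  have Gneg: "- g \<in> G" if "g \<in> G" for g
    using Gsc[of "-1" g] that s(3) by simp
  have Gb: "G \<in> sets borel" using compact_imp_closed[OF G] by (simp add: borel_closed)
  have Tadd: "T (u + v) = T u + T v" and Tsc: "T (sc a u) = a * T u" and Tc: "continuous_on UNIV T"
    for u v a using dual_elem_lin[OF T] by auto
  have T0: "T 0 = 0" using Tsc[of 0 0] by simp
  have Tdiff: "T (u - v) = T u - T v" for u v using Tadd[of "u - v" v] by simp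
  have psi_c: "continuous_on UNIV (\<lambda>y. av (T y))"
    using continuous_on_compose[OF Tc continuous_on_subset[OF na_continuous[OF na]]] by (simp add: o_def)
  have psi_m: "(\<lambda>y. av (T y)) \<in> borel_measurable borel"
    by (rule borel_measurable_continuous_onI[OF psi_c])
  define c where "c = av (T x)"
  define B where "B = {y. c \<le> av (T y)}"
  have Bb: "B \<in> sets borel"
  proof -
    have "(\<lambda>y. av (T y)) -` {c..} \<inter> space borel \<in> sets borel"
      by (rule measurable_sets[OF psi_m]) simp
    then show ?thesis unfolding B_def by (simp add: vimage_def)
  qed
  have pos: "emeasure \<mu> B \<noteq> 0"
  proof (cases "c = 0")
    case True
    then have "B = UNIV" unfolding B_def using f(1) by auto
    then show ?thesis using muU by simp
  next
    case False
    then have c0: "c > 0" unfolding c_def using f(1)[of "T x"] by linarith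
    define W where "W g = {y. av (T (y - g)) < c}" for g
    have Wo: "open (W g)" for g
    proof -
      have "continuous_on UNIV (\<lambda>y. av (T (y - g)))"
      proof -
        have "continuous_on UNIV (\<lambda>y. - g + y)" by (rule cont_translate[OF sb])
        then show ?thesis
          using continuous_on_compose[OF \<open>continuous_on UNIV (\<lambda>y. - g + y)\<close>
              continuous_on_subset[OF psi_c]] by (simp add: o_def)
      qed
      then show ?thesis unfolding W_def
        by (rule open_Collect_less[OF _ continuous_on_const, unfolded continuous_on_eq_continuous_at[OF open_UNIV], simplified])
    qed
    have cover: "G \<subseteq> (\<Union>g\<in>G. W g)" using c0 T0 f(1) unfolding W_def by (auto simp: s(1))
    obtain F where F: "F \<subseteq> G" "finite F" "G \<subseteq> (\<Union>g\<in>F. W g)"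
      using compactE_image[OF G Wo cover] by metis
    define H where "H = G \<inter> W 0"
    have Hb: "H \<in> sets borel" unfolding H_def using Gb Wo[of 0] by (simp add: borel_open)
    have HG: "H \<subseteq> G" unfolding H_def by auto
    have trans: "G \<inter> W g = (\<lambda>y. g + y) ` H" if g: "g \<in> G" for g
    proof
      show "G \<inter> W g \<subseteq> (\<lambda>y. g + y) ` H"
      proof
        fix y assume y: "y \<in> G \<inter> W g"
        then have "y - g \<in> H" unfolding H_def W_def using Gadd[OF _ Gneg[OF g]] by auto
        moreover have "y = g + (y - g)" by simp
        ultimately show "y \<in> (\<lambda>y. g + y) ` H" by blast
      qed
      show "(\<lambda>y. g + y) ` H \<subseteq> G \<inter> W g"
        unfolding H_def W_def using Gadd[OF g] by auto
    qed
    have muH: "emeasure \<mu> ((\<lambda>y. g + y) ` H) = emeasure \<mu> H" if "g \<in> G" for g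
      using inv[OF that Hb HG] .
    have "1 = emeasure \<mu> G" using muG by simp
    also have "\<dots> \<le> emeasure \<mu> (\<Union>g\<in>F. G \<inter> W g)"
    proof (rule emeasure_mono)
      show "G \<subseteq> (\<Union>g\<in>F. G \<inter> W g)" using F(3) by blast
      show "(\<Union>g\<in>F. G \<inter> W g) \<in> sets \<mu>" using smu Gb Wo F(2)
        by (intro sets.finite_UN) (auto simp: borel_open)
    qed
    also have "\<dots> \<le> (\<Sum>g\<in>F. emeasure \<mu> (G \<inter> W g))"
      using smu Gb Wo F(2) by (intro emeasure_subadditive_finite) (auto simp: borel_open)
    also have "\<dots> = (\<Sum>g\<in>F. emeasure \<mu> H)"
      using F(1) trans muH by (intro sum.cong) auto
    finally have "emeasure \<mu> H \<noteq> 0" by auto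
    moreover have "(\<lambda>y. x + y) ` H \<subseteq> B"
    proof
      fix z assume "z \<in> (\<lambda>y. x + y) ` H"
      then obtain h where h: "h \<in> H" "z = x + h" by blast
      then have "av (T h) < c" unfolding H_def W_def by simp
      have "av (T x) \<le> max (av (T x + T h)) (av (- T h))"
        using f(4)[of "T x + T h" "- T h"] by simp
      then have "c \<le> av (T x + T h)" using \<open>av (T h) < c\<close> s(4) unfolding c_def by (auto simp: max_def split: if_splits)
      then show "z \<in> B" unfolding B_def using h Tadd by simp
    qed
    moreover have "(\<lambda>y. x + y) ` H \<in> sets \<mu>"
    proof -
      have "(\<lambda>y. x + y) ` H = G \<inter> W x" using trans[OF x] by simp
      then show ?thesis using smu Gb Wo by (simp add: borel_open)
    qed
    ultimately have "emeasure \<mu> ((\<lambda>y. x + y) ` H) \<le> emeasure \<mu> B" "emeasure \<mu> ((\<lambda>y. x + y) ` H) \<noteq> 0"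
      using muH[OF x] emeasure_mono[of "(\<lambda>y. x + y) ` H" B \<mu>] Bb smu by auto
    then show ?thesis by auto
  qed
  show ?thesis
  proof (rule ccontr)
    assume "\<not> ereal (av (T x)) \<le> esssup M (\<lambda>\<omega>. ereal (av (T (X \<omega>))))"
    then have lt: "esssup M (\<lambda>\<omega>. ereal (av (T (X \<omega>)))) < ereal c" unfolding c_def by simp
    have "AE \<omega> in M. ereal (av (T (X \<omega>))) \<le> esssup M (\<lambda>\<omega>. ereal (av (T (X \<omega>))))"
      by (rule esssup_AE)
    then have "AE \<omega> in M. \<omega> \<notin> X -` B \<inter> space M"
    proof eventually_elim
      case (elim \<omega>)
      show ?case
      proof
        assume "\<omega> \<in> X -` B \<inter> space M"
        then have "ereal c \<le> ereal (av (T (X \<omega>)))" unfolding B_def by simp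
        from order_trans[OF this elim] have "ereal c \<le> esssup M (\<lambda>\<omega>. ereal (av (T (X \<omega>))))" .
        then show False using lt by simp
      qed
    qed
    moreover have XB: "X -` B \<inter> space M \<in> sets M" using measurable_sets[OF Xm Bb] .
    moreover have "{\<omega> \<in> space M. \<not> \<omega> \<notin> X -` B \<inter> space M} = X -` B \<inter> space M" by auto
    ultimately have "emeasure M (X -` B \<inter> space M) = 0"
      using AE_iff_measurable[OF XB, of "\<lambda>\<omega>. \<omega> \<notin> X -` B \<inter> space M"] by blast
    moreover have "emeasure \<mu> B = emeasure M (X -` B \<inter> space M)"
      unfolding \<mu>_def using Bb Xm by (simp add: emeasure_distr)
    ultimately show False using pos by simp
  qed
qed

lemma char_sup:
  fixes av :: "'k::{field,metric_space} \<Rightarrow> real" and sc :: "'k \<Rightarrow> 'e::{ab_group_add,metric_space} \<Rightarrow> 'e"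
    and M :: "'w measure" and X :: "'w \<Rightarrow> 'e"
  assumes lf: "local_field av" and sb: "separable_banach av sc nrm" and G: "compact G"
    and GD: "D_submodule av sc G" and P: "prob_space M" and Xm: "X \<in> borel_measurable M"
    and mu: "normalised_haar G (distr M borel X)"
    and x: "x \<notin> G"
  shows "\<exists>T. dual_elem sc T \<and> \<not> ereal (av (T x)) \<le> esssup M (\<lambda>\<omega>. ereal (av (T (X \<omega>))))"
proof -
  note na = lf_na[OF lf]
  interpret prob_space M by fact
  obtain T where T: "dual_elem sc T" "\<And>g. g \<in> G \<Longrightarrow> av (T g) \<le> 1" "av (T x) > 1"
    using separate[OF lf sb G GD x] by blast
  have Gb: "G \<in> sets borel" using compact_imp_closed[OF G] by (simp add: borel_closed)
  have psi_c: "continuous_on UNIV (\<lambda>y. av (T y))"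
    using continuous_on_compose[OF dual_elem_lin(3)[OF T(1)] continuous_on_subset[OF na_continuous[OF na]]]
    by (simp add: o_def)
  have fm: "(\<lambda>\<omega>. ereal (av (T (X \<omega>)))) \<in> borel_measurable M"
    using measurable_compose[OF Xm borel_measurable_continuous_onI[OF psi_c]] by simp
  have "emeasure M (X -` G \<inter> space M) = 1"
    using mu Gb Xm unfolding normalised_haar_def by (simp add: emeasure_distr)
  then have pr: "prob (X -` G \<inter> space M) = 1" by (simp add: emeasure_eq_measure)
  have "AE \<omega> in M. \<omega> \<in> X -` G \<inter> space M"
    by (rule AE_in_set_eq_1[OF measurable_sets[OF Xm Gb], THEN iffD2, OF pr])
  then have "AE \<omega> in M. X \<omega> \<in> G" by eventually_elim auto
  then have "AE \<omega> in M. ereal (av (T (X \<omega>))) \<le> 1"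
    by eventually_elim (use T(2) in auto)
  then have es: "esssup M (\<lambda>\<omega>. ereal (av (T (X \<omega>)))) \<le> 1" by (rule esssup_I[OF fm])
  have "\<not> ereal (av (T x)) \<le> esssup M (\<lambda>\<omega>. ereal (av (T (X \<omega>))))"
  proof
    assume "ereal (av (T x)) \<le> esssup M (\<lambda>\<omega>. ereal (av (T (X \<omega>))))"
    then have "ereal (av (T x)) \<le> 1" using es by (rule order_trans)
    then show False using T(3) by simp
  qed
  then show ?thesis using T(1) by blast
qed

theorem theorem4p7:
  fixes av :: "'k::{field,metric_space} \<Rightarrow> real"
    and sc :: "'k \<Rightarrow> 'e::{ab_group_add,metric_space} \<Rightarrow> 'e"
    and nrm :: "'e \<Rightarrow> real"
    and G :: "'e set"
    and M :: "'w measure"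
    and X :: "'w \<Rightarrow> 'e"
  assumes "local_field av"
    and "separable_banach av sc nrm"
    and "compact G"
    and "D_submodule av sc G"
    and "prob_space M"
    and "X \<in> borel_measurable M"
    and "normalised_haar G (distr M borel X)"
  shows "K_gaussian av sc M X \<and>
    G = {x. \<forall>T. dual_elem sc T \<longrightarrow>
               ereal (av (T x)) \<le> esssup M (\<lambda>\<omega>. ereal (av (T (X \<omega>))))}"
proof
  show "K_gaussian av sc M X"
    unfolding K_gaussian_def Let_def
    using gaussian_part[OF assms(1-4) assms(7)] by blast
  show "G = {x. \<forall>T. dual_elem sc T \<longrightarrow>
               ereal (av (T x)) \<le> esssup M (\<lambda>\<omega>. ereal (av (T (X \<omega>))))}"
  proof
    show "G \<subseteq> {x. \<forall>T. dual_elem sc T \<longrightarrow> ereal (av (T x)) \<le> esssup M (\<lambda>\<omega>. ereal (av (T (X \<omega>))))}"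
      using char_sub[OF assms] by blast
    show "{x. \<forall>T. dual_elem sc T \<longrightarrow> ereal (av (T x)) \<le> esssup M (\<lambda>\<omega>. ereal (av (T (X \<omega>))))} \<subseteq> G"
      using char_sup[OF assms] by blast
  qed
qed


end
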